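(* Let $p,q$ satisfy $p(q-1)>2+\frac{1}{pq}$, $1<q<2$, $2<p<3$, and fix $\mu<1$ with $-\mu-pq+2p\leq p-3-\frac{\mu}{pq}$. Define for $t\geq0$, $r\geq0$ the weights $\omega_1,\omega_2,\omega_3$ by \[ \omega_1=\begin{cases}\langle r\rangle\langle t-r\rangle^{\mu/p+q-2}&(r<t/2),\\ \langle t-r\rangle^{\mu/p}\langle t+r\rangle^{q-1}&(r\geq t/2),\end{cases}\quad \omega_2=\begin{cases}\langle r\rangle^{p-2}\langle t+r\rangle^{3-p+\mu/(pq)}&(r<t/2),\\ \langle t-r\rangle^{\mu/(pq)}\langle t+r\rangle&(r\geq t/2),\end{cases}\quad \omega_3=\langle t-r\rangle^{\mu+pq-2p}, \] and the modified weights \[ \tilde\omega_1=\begin{cases}r\langle t-r\rangle^{\mu/p+q-2}&(r<t/2),\\ \langle t-r\rangle^{\mu/p}\langle t+r\rangle^{q-1}&(r\geq t/2),\end{cases}\qquad \tilde\omega_2=\begin{cases}r^{p-2}\langle t+r\rangle^{3-p+\mu/(pq)}&(r<t/2),\\ \langle t-r\rangle^{\mu/(pq)}\langle t+r\rangle&(r\geq t/2).\end{cases} \] For functions $F(t,r)$ (extended evenly in $r$) define \[ LF(t,r)=\frac{1}{2r}\int_0^t\int_{r-t+s}^{r+t-s}\rho F(s,\rho)\,d\rho\,ds,\qquad K_+F(t,r)=\frac12\int_0^t\Big[(r+t-s)F(s,r+t-s)+(r-t+s)F(s,r-t+s)\Big]ds . \] Let $\varepsilon>0$, $C_1>0$,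 and let $X_\varepsilon$ be the set of pairs $(w,v)$ with $w,v,r\partial_rv\in C([2,\infty)\times\mathbb{R})$ (even in $r$), $\operatorname{supp}(w,v)\subset\{t-r\geq1,\ t\geq2\}$, and $\|\omega_1w\|_{L^\infty_{t,r}}+\|\omega_2v\|_{L^\infty_{t,r}}+\|\omega_3\,r\partial_rv\|_{L^\infty_{t,r}}\leq C_1\varepsilon$. Then there is a constant $C>0$ such that for all $(w,v),(\bar w,\bar v)\in X_\varepsilon$, \[ \|\tilde\omega_2L(|w|^p-|\bar w|^p)\|_{L^\infty_{t,r}}\leq C\|\tilde\omega_1(w,\bar w)\|_{L^\infty_{t,r}}^{p-1}\|\tilde\omega_1(w-\bar w)\|_{L^\infty_{t,r}}, \] \[ \|\tilde\omega_1r^{-1}K_+(|v|^q-|\bar v|^q)\|_{L^\infty_{t,r}}\leq C\|\tilde\omega_2(v,\bar v)\|_{L^\infty_{t,r}}^{q-1}\|\tilde\omega_2(v-\bar v)\|_{L^\infty_{t,r}} . \]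
   Context: $\langle a\rangle:=\sqrt{1+|a|^2}$. $L^\infty_{t,r}$ denotes the supremum norm over $t\geq0$, $r\geq0$; functions vanish for $t<2$. For a pair, $\|\tilde\omega_1(w,\bar w)\|_{L^\infty_{t,r}}$ denotes $\|\tilde\omega_1w\|_{L^\infty_{t,r}}+\|\tilde\omega_1\bar w\|_{L^\infty_{t,r}}$ (equivalently up to constants, the maximum), and similarly for $\tilde\omega_2(v,\bar v)$. *)

theory Defs
  imports "HOL-Analysis.Analysis"
begin

definition jb :: "real \<Rightarrow> real" where
  "jb a = sqrt (1 + a\<^sup>2)"

definition omega1 :: "real \<Rightarrow> real \<Rightarrow> real \<Rightarrow> real \<Rightarrow> real \<Rightarrow> real" where
  "omega1 p q mu t r =
     (if r < t / 2 then jb r * jb (t - r) powr (mu / p + q - 2)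
      else jb (t - r) powr (mu / p) * jb (t + r) powr (q - 1))"

definition omega2 :: "real \<Rightarrow> real \<Rightarrow> real \<Rightarrow> real \<Rightarrow> real \<Rightarrow> real" where
  "omega2 p q mu t r =
     (if r < t / 2 then jb r powr (p - 2) * jb (t + r) powr (3 - p + mu / (p * q))
      else jb (t - r) powr (mu / (p * q)) * jb (t + r))"

definition omega3 :: "real \<Rightarrow> real \<Rightarrow> real \<Rightarrow> real \<Rightarrow> real \<Rightarrow> real" where
  "omega3 p q mu t r = jb (t - r) powr (mu + p * q - 2 * p)"

definition omega1t :: "real \<Rightarrow> real \<Rightarrow> real \<Rightarrow> real \<Rightarrow> real \<Rightarrow> real" where
  "omega1t p q mu t r =
     (if r < t / 2 then r * jb (t - r) powr (mu / p + q - 2)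
      else jb (t - r) powr (mu / p) * jb (t + r) powr (q - 1))"

definition omega2t :: "real \<Rightarrow> real \<Rightarrow> real \<Rightarrow> real \<Rightarrow> real \<Rightarrow> real" where
  "omega2t p q mu t r =
     (if r < t / 2 then r powr (p - 2) * jb (t + r) powr (3 - p + mu / (p * q))
      else jb (t - r) powr (mu / (p * q)) * jb (t + r))"

text \<open>Supremum norm over t \<ge> 0, r \<ge> 0 (real-valued; used only for bounded functions).\<close>
definition Linf :: "(real \<Rightarrow> real \<Rightarrow> real) \<Rightarrow> real" where
  "Linf f = Sup {\<bar>f t r\<bar> | t r. 0 \<le> t \<and> 0 \<le> r}"

text \<open>The operators L and K_+ (F is assumed to be even in its second argument).\<close>
definition Lop :: "(real \<Rightarrow> real \<Rightarrow> real) \<Rightarrow> real \<Rightarrow> real \<Rightarrow> real" where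
  "Lop F t r = 1 / (2 * r) *
     integral {0..t} (\<lambda>s. integral {r - t + s..r + t - s} (\<lambda>\<rho>. \<rho> * F s \<rho>))"

definition Kplus :: "(real \<Rightarrow> real \<Rightarrow> real) \<Rightarrow> real \<Rightarrow> real \<Rightarrow> real" where
  "Kplus F t r = 1 / 2 *
     integral {0..t} (\<lambda>s. (r + t - s) * F s (r + t - s) + (r - t + s) * F s (r - t + s))"

definition Xeps :: "real \<Rightarrow> real \<Rightarrow> real \<Rightarrow> real \<Rightarrow> real
    \<Rightarrow> ((real \<Rightarrow> real \<Rightarrow> real) \<times> (real \<Rightarrow> real \<Rightarrow> real)) set" where
  "Xeps p q mu C1 eps = {(w, v).
     continuous_on ({2..} \<times> UNIV) (\<lambda>(t, r). w t r) \<and>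
     continuous_on ({2..} \<times> UNIV) (\<lambda>(t, r). v t r) \<and>
     (\<forall>t r. t \<ge> 2 \<and> r \<noteq> 0 \<longrightarrow> v t differentiable (at r)) \<and>
     continuous_on ({2..} \<times> UNIV) (\<lambda>(t, r). r * deriv (v t) r) \<and>
     (\<forall>t r. w t (- r) = w t r \<and> v t (- r) = v t r) \<and>
     (\<forall>t r. w t r \<noteq> 0 \<longrightarrow> t - r \<ge> 1 \<and> t \<ge> 2) \<and>
     (\<forall>t r. v t r \<noteq> 0 \<longrightarrow> t - r \<ge> 1 \<and> t \<ge> 2) \<and>
     (\<exists>A B D. (\<forall>t r. 0 \<le> t \<and> 0 \<le> r \<longrightarrow>
                    \<bar>omega1 p q mu t r * w t r\<bar> \<le> A \<and>
                    \<bar>omega2 p q mu t r * v t r\<bar> \<le> B \<and>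
                    \<bar>omega3 p q mu t r * (r * deriv (v t) r)\<bar> \<le> D) \<and>
              A + B + D \<le> C1 * eps)}"

end

theory Submission
  imports Defs
begin

lemma jb_pos: "jb x > 0" unfolding jb_def by (simp add: add_pos_nonneg)
lemma jb_ge1: "jb x \<ge> 1" unfolding jb_def by simp
lemma jb_ge_abs: "jb x \<ge> \<bar>x\<bar>" unfolding jb_def
  by (metis abs_ge_zero add.commute le_add_same_cancel1 real_sqrt_abs real_sqrt_le_mono zero_le_one)
lemma jb_le: "jb x \<le> 1 + \<bar>x\<bar>"
proof -
  have "1 + x\<^sup>2 \<le> (1 + \<bar>x\<bar>)\<^sup>2" by (simp add: power2_eq_square algebra_simps)
  then have "sqrt (1 + x\<^sup>2) \<le> sqrt ((1 + \<bar>x\<bar>)\<^sup>2)" by (rule real_sqrt_le_mono)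
  then show ?thesis unfolding jb_def by simp
qed
lemma jb_le2: "\<bar>x\<bar> \<ge> 1 \<Longrightarrow> jb x \<le> 2 * \<bar>x\<bar>" using jb_le[of x] by simp
lemma jb_ge: "x \<ge> 0 \<Longrightarrow> jb x \<ge> x" using jb_ge_abs[of x] by simp

lemma int_bound:
  fixes f g :: "real \<Rightarrow> real"
  assumes g: "(g has_integral G) {a..b}" and E: "finite E"
    and le: "\<And>x. x \<in> {a..b} - E \<Longrightarrow> \<bar>f x\<bar> \<le> g x" and G: "0 \<le> G"
  shows "\<bar>integral {a..b} f\<bar> \<le> G"
proof (cases "f integrable_on {a..b}")
  case True
  define g' where "g' x = (if x \<in> E then \<bar>f x\<bar> else g x)" for x
  have g': "(g' has_integral G) {a..b}"
    by (rule has_integral_spike_finite[OF E _ g]) (auto simp: g'_def)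
  have "norm (integral {a..b} f) \<le> integral {a..b} g'"
    by (rule integral_norm_bound_integral[OF True]) (use g' le in \<open>auto simp: g'_def\<close>)
  then show ?thesis using g' by (simp add: integral_unique)
next
  case False
  then show ?thesis using G by (simp add: not_integrable_integral)
qed

lemma pow_has_int:
  fixes k d g a b :: real
  assumes ab: "a \<le> b" and k: "k \<noteq> 0" and g: "g \<noteq> -1"
    and nn: "\<And>x. x \<in> {a..b} \<Longrightarrow> 0 \<le> k*x+d"
    and pos: "\<And>x. x \<in> {a<..<b} \<Longrightarrow> 0 < k*x+d"
    and gp: "g + 1 > 0 \<or> (\<forall>x\<in>{a..b}. 0 < k*x+d)"
  shows "((\<lambda>x. (k*x+d) powr g) has_integral
           ((k*b+d) powr (g+1) - (k*a+d) powr (g+1)) / (k*(g+1))) {a..b}"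
proof -
  define F where "F x = (k*x+d) powr (g+1) / (k*(g+1))" for x
  have "((\<lambda>x. (k*x+d) powr g) has_integral F b - F a) {a..b}"
  proof (rule fundamental_theorem_of_calculus_interior[OF ab])
    have "continuous_on {a..b} (\<lambda>x. (k*x+d) powr (g+1))"
    proof (rule continuous_on_powr')
      show "\<forall>x\<in>{a..b}. 0 \<le> k * x + d \<and> (k * x + d = 0 \<longrightarrow> 0 < g + 1)"
        using nn gp by force
    qed (auto intro!: continuous_intros)
    moreover have "k*(g+1) \<noteq> 0" using k g by auto
    ultimately show "continuous_on {a..b} F" unfolding F_def
      by (intro continuous_on_divide continuous_on_const) auto
  next
    fix x assume x: "x \<in> {a<..<b}"
    have "((\<lambda>x. (k*x+d) powr (g+1)) has_real_derivative (g+1) * (k*x+d) powr (g+1-1) * k) (at x)"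
      using DERIV_powr[of "\<lambda>x. k*x+d" k x "\<lambda>_. g+1" 0] pos[OF x]
      by (auto intro!: derivative_eq_intros)
    then have "(F has_real_derivative (g+1) * (k*x+d) powr (g+1-1) * k / (k*(g+1))) (at x)"
      unfolding F_def by (rule DERIV_cdivide)
    moreover have "(g+1) * (k*x+d) powr (g+1-1) * k / (k*(g+1)) = (k*x+d) powr g"
    proof -
      have kg: "k*(g+1) \<noteq> 0" using k g by auto
      have "(g+1) * (k*x+d) powr (g+1-1) * k = (k*x+d) powr g * (k*(g+1))" by (simp add: mult_ac)
      then show ?thesis using kg by simp
    qed
    ultimately have "(F has_real_derivative (k*x+d) powr g) (at x)" by simp
    then show "(F has_vector_derivative (k*x+d) powr g) (at x)"
      by (simp add: has_real_derivative_iff_has_vector_derivative)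
  qed
  then show ?thesis unfolding F_def by (simp add: diff_divide_distrib)
qed

lemma odd_int_zero:
  fixes f :: "real \<Rightarrow> real"
  assumes c: "continuous_on {-c..c} f" and odd: "\<And>x. f (-x) = - f x" and c0: "0 \<le> c"
  shows "integral {-c..c} f = 0"
proof -
  have i: "f integrable_on {-c..c}" using c integrable_continuous_real by blast
  have "integral {-c..0} f + integral {0..c} f = integral {-c..c} f"
    by (rule Henstock_Kurzweil_Integration.integral_combine) (use c0 i in auto)
  moreover have "integral {-c..0} f = integral {0..c} (\<lambda>x. f (-x))"
    using Henstock_Kurzweil_Integration.integral_reflect_real[of c 0 "\<lambda>x. f (-x)"] by simp
  moreover have "integral {0..c} (\<lambda>x. f (-x)) = - integral {0..c} f"
    by (simp add: odd integral_neg)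
  ultimately show ?thesis by simp
qed

lemma powdiff_le:
  fixes x y p :: real
  assumes p: "p \<ge> 1" and y: "0 \<le> y" and xy: "y \<le> x"
  shows "x powr p - y powr p \<le> p * x powr (p-1) * (x - y)"
proof (cases "y < x")
  case True
  have "\<exists>l z. y < z \<and> z < x \<and> ((\<lambda>u. u powr p) has_real_derivative l) (at z) \<and>
           x powr p - y powr p = (x - y) * l"
    by (rule MVT[OF True]) (use y p in \<open>auto intro!: continuous_intros continuous_on_powr'
         simp: real_differentiable_def intro!: exI has_real_derivative_powr\<close>)
  then obtain l z where z: "y < z" "z < x" and d: "((\<lambda>u. u powr p) has_real_derivative l) (at z)"
    and e: "x powr p - y powr p = (x - y) * l" by blast
  have "l = p * z powr (p-1)"
    using DERIV_unique[OF d has_real_derivative_powr[of z p]] z y by simp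
  moreover have "z powr (p-1) \<le> x powr (p-1)"
    using z y p by (intro powr_mono2) auto
  ultimately show ?thesis using e True p
    by (simp add: mult_left_mono mult.commute mult.left_commute)
qed (use xy in simp)

lemma powabs_diff:
  fixes a b p :: real
  assumes p: "p \<ge> 1"
  shows "\<bar>\<bar>a\<bar> powr p - \<bar>b\<bar> powr p\<bar> \<le> p * (max \<bar>a\<bar> \<bar>b\<bar>) powr (p-1) * \<bar>a - b\<bar>"
proof -
  have aux: "\<bar>x powr p - y powr p\<bar> \<le> p * (max x y) powr (p-1) * \<bar>x - y\<bar>"
    if "0 \<le> x" "0 \<le> y" for x y
  proof (cases "y \<le> x")
    case True
    moreover have "y powr p \<le> x powr p" using True that p by (intro powr_mono2) auto
    ultimately show ?thesis using powdiff_le[OF p \<open>0\<le>y\<close> True] that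
      by (simp add: max_def)
  next
    case False
    moreover have "x powr p \<le> y powr p" using False that p by (intro powr_mono2) auto
    ultimately show ?thesis using powdiff_le[OF p \<open>0\<le>x\<close>, of y] that
      by (simp add: max_def abs_minus_commute)
  qed
  have "\<bar>\<bar>a\<bar> powr p - \<bar>b\<bar> powr p\<bar> \<le> p * (max \<bar>a\<bar> \<bar>b\<bar>) powr (p-1) * \<bar>\<bar>a\<bar> - \<bar>b\<bar>\<bar>"
    by (rule aux) auto
  also have "\<dots> \<le> p * (max \<bar>a\<bar> \<bar>b\<bar>) powr (p-1) * \<bar>a - b\<bar>"
    using p by (intro mult_left_mono) auto
  finally show ?thesis .
qed

lemma has_int_window:
  fixes f :: "real \<Rightarrow> real"
  assumes "a \<le> c" "c \<le> d" "d \<le> b" and f: "(f has_integral I) {c..d}"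
  shows "((\<lambda>x. if c \<le> x \<and> x \<le> d then f x else 0) has_integral I) {a..b}"
proof -
  let ?g = "\<lambda>x. if c \<le> x \<and> x \<le> d then f x else 0"
  have 1: "(?g has_integral 0) {a..c}"
    by (rule has_integral_spike_finite[of "{c}" _ _ "\<lambda>_. 0"]) (auto intro: has_integral_0)
  have 2: "(?g has_integral I) {c..d}"
    by (rule has_integral_spike_finite[of "{}" _ _ f]) (use f in auto)
  have 3: "(?g has_integral 0) {d..b}"
    by (rule has_integral_spike_finite[of "{d}" _ _ "\<lambda>_. 0"]) (auto intro: has_integral_0)
  have 4: "(?g has_integral 0 + I) {a..d}" by (rule has_integral_combine[OF _ _ 1 2]) (use assms in auto)
  have "(?g has_integral 0 + I + 0) {a..b}" by (rule has_integral_combine[OF _ _ 4 3]) (use assms in auto)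
  then show ?thesis by simp
qed

lemma abs_pow_has_int:
  fixes T a b g :: real
  assumes "a \<le> T" "T \<le> b" "g > -1"
  shows "((\<lambda>s. \<bar>s - T\<bar> powr g) has_integral ((T-a) powr (g+1) + (b-T) powr (g+1))/(g+1)) {a..b}"
proof -
  have g1: "g \<noteq> -1" using assms by auto
  have A: "((\<lambda>s. (T - s) powr g) has_integral (T-a) powr (g+1)/(g+1)) {a..T}"
  proof -
    have "- g - 1 \<noteq> 0" "g + 1 \<noteq> 0" using g1 by auto
    then have e: "- ((T - a) powr (g + 1) / (- g - 1)) = (T-a) powr (g+1)/(g+1)"
      by (simp add: field_simps)
    show ?thesis using pow_has_int[of a T "-1" g T] assms g1 by (simp add: e)
  qed
  have A': "((\<lambda>s. \<bar>s - T\<bar> powr g) has_integral (T-a) powr (g+1)/(g+1)) {a..T}"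
    by (rule has_integral_spike_finite[of "{}" _ _ _ , OF _ _ A]) auto
  have B: "((\<lambda>s. (s - T) powr g) has_integral (b-T) powr (g+1)/(g+1)) {T..b}"
    using pow_has_int[of T b 1 g "-T"] assms g1 by simp
  have B': "((\<lambda>s. \<bar>s - T\<bar> powr g) has_integral (b-T) powr (g+1)/(g+1)) {T..b}"
    by (rule has_integral_spike_finite[of "{}" _ _ _ , OF _ _ B]) auto
  show ?thesis using has_integral_combine[OF assms(1,2) A' B'] by (simp add: add_divide_distrib)
qed

definition prm :: "real \<Rightarrow> real \<Rightarrow> real \<Rightarrow> bool" where
  "prm p q mu \<longleftrightarrow> p * (q - 1) > 2 + 1 / (p * q) \<and> 1 < q \<and> q < 2 \<and> 2 < p \<and> p < 3 \<and> mu < 1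
     \<and> - mu - p * q + 2 * p \<le> p - 3 - mu / (p * q)"

lemma prm_facts:
  assumes "prm p q mu"
  shows "0 < mu" "1 < q" "q < 2" "2 < p" "p < 3" "mu < 1"
    "3 - p + mu/(p*q) \<le> mu + p*q - 2*p"
    "0 < 3 - p + mu/(p*q)"
    "p*q - p > 2"
    "p + 3 - mu - p*q + mu/(p*q) \<le> 0"
    "0 < p*q"
proof -
  have p: "2 < p" "p < 3" and q: "1 < q" "q < 2" and m: "mu < 1"
    and h1: "p * (q - 1) > 2 + 1 / (p * q)" and h2: "- mu - p * q + 2 * p \<le> p - 3 - mu / (p * q)"
    using assms unfolding prm_def by auto
  have pq: "p*q > 2" using mult_strict_mono[of 2 p 1 q] p q by simp
  show "0 < p*q" using pq by simp
  have "p*(q-1) < p * 1" using p q by (intro mult_strict_left_mono) auto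
  then have "p*q - p < p" by (simp add: algebra_simps)
  then have A: "p + 3 - p*q > 0" using p by linarith
  have B: "1/(p*q) < 1" using pq by simp
  have C: "p + 3 - p*q \<le> mu * (1 - 1/(p*q))" using h2 by (simp add: algebra_simps)
  show mu0: "0 < mu"
  proof (rule ccontr)
    assume "\<not> 0 < mu"
    then have "mu * (1 - 1/(p*q)) \<le> 0" using B by (intro mult_nonpos_nonneg) auto
    then show False using A C by linarith
  qed
  show "1 < q" "q < 2" "2 < p" "p < 3" "mu < 1" using p q m by auto
  show "3 - p + mu/(p*q) \<le> mu + p*q - 2*p" using h2 by linarith
  show "0 < 3 - p + mu/(p*q)" using p mu0 pq by (simp add: add_pos_pos)
  have "1/(p*q) > 0" using pq by simp
  moreover have "p*q - p > 2 + 1/(p*q)" using h1 by (simp add: algebra_simps)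
  ultimately show "p*q - p > 2" by linarith
  show "p + 3 - mu - p*q + mu/(p*q) \<le> 0" using h2 by linarith
qed

lemma om2t_I:
  assumes q: "q > 0" and r: "0 < r" "r < t/2"
  shows "omega2t p q mu t r powr (-q) = r powr (-(q*(p-2))) * jb (t+r) powr (-(q*(3-p+mu/(p*q))))"
proof -
  have "omega2t p q mu t r powr (-q) = (r powr (p-2)) powr (-q) * (jb (t+r) powr (3-p+mu/(p*q))) powr (-q)"
    unfolding omega2t_def using r by (simp add: powr_mult)
  also have "\<dots> = r powr (-(q*(p-2))) * jb (t+r) powr (-(q*(3-p+mu/(p*q))))"
    by (simp add: powr_powr mult_ac)
  finally show ?thesis .
qed

lemma om2t_II:
  assumes q: "q > 0" and p: "p > 0" and r: "t/2 \<le> r"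
  shows "omega2t p q mu t r powr (-q) = jb (t-r) powr (-(mu/p)) * jb (t+r) powr (-q)"
proof -
  have "omega2t p q mu t r powr (-q) = (jb (t-r) powr (mu/(p*q))) powr (-q) * jb (t+r) powr (-q)"
    unfolding omega2t_def using r jb_pos by (simp add: powr_mult less_imp_le)
  also have "\<dots> = jb (t-r) powr (-(mu/p)) * jb (t+r) powr (-q)"
    using q p by (simp add: powr_powr)
  finally show ?thesis .
qed

lemma om1t_I:
  assumes p: "p > 0" and r: "0 < r" "r < t/2"
  shows "omega1t p q mu t r powr (-p) = r powr (-p) * jb (t-r) powr (-(mu + p*q - 2*p))"
proof -
  have "omega1t p q mu t r powr (-p) = r powr (-p) * (jb (t-r) powr (mu/p+q-2)) powr (-p)"
    unfolding omega1t_def using r by (simp add: powr_mult)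
  also have "\<dots> = r powr (-p) * jb (t-r) powr (-(mu + p*q - 2*p))"
    using p by (simp add: powr_powr algebra_simps)
  finally show ?thesis .
qed

lemma om1t_II:
  assumes p: "p > 0" and r: "t/2 \<le> r"
  shows "omega1t p q mu t r powr (-p) = jb (t-r) powr (-mu) * jb (t+r) powr (-(p*(q-1)))"
proof -
  have "omega1t p q mu t r powr (-p) = (jb (t-r) powr (mu/p)) powr (-p) * (jb (t+r) powr (q-1)) powr (-p)"
    unfolding omega1t_def using r jb_pos by (simp add: powr_mult less_imp_le)
  also have "\<dots> = jb (t-r) powr (-mu) * jb (t+r) powr (-(p*(q-1)))"
    using p by (simp add: powr_powr algebra_simps)
  finally show ?thesis .
qed

lemma jbn: "0 < x \<Longrightarrow> 0 \<le> e \<Longrightarrow> jb x powr (-e) \<le> x powr (-e)"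
  by (rule powr_mono2') (auto simp: jb_ge)

lemma mulpow: "0 < (x::real) \<Longrightarrow> x * x powr a = x powr (1 + a)"
  using powr_add[of x 1 a] by simp

definition H2 :: "real \<Rightarrow> real \<Rightarrow> real \<Rightarrow> real \<Rightarrow> real \<Rightarrow> real" where
  "H2 p q mu s \<rho> = (if 2 \<le> s \<and> \<rho> \<le> s - 1 then omega2t p q mu s \<rho> powr (-q) else 0)"

lemma P_bound:
  assumes pr: "prm p q mu" and r: "0 < r" and s: "0 \<le> s" "s \<le> t"
  shows "(t+r-s) * H2 p q mu s (t+r-s) \<le>
     (t+r) powr (-(q*(3-p+mu/(p*q)))) * (t+r-s) powr (1 - q*(p-2))
     + (if (t+r+1)/2 \<le> s \<and> s \<le> t then (t+r) powr (1-q) * (2* s-(t+r)) powr (-(mu/p)) else 0)"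
proof -
  note f = prm_facts[OF pr]
  define S where "S = t + r"
  define \<rho> where "\<rho> = t + r - s"
  have \<rho>0: "0 < \<rho>" using r s unfolding \<rho>_def by simp
  have S0: "0 < S" using r s unfolding S_def by simp
  have R1: "0 \<le> (t+r) powr (-(q*(3-p+mu/(p*q)))) * (t+r-s) powr (1 - q*(p-2))" by simp
  have R2: "0 \<le> (if (t+r+1)/2 \<le> s \<and> s \<le> t then (t+r) powr (1-q) * (2* s-(t+r)) powr (-(mu/p)) else 0)"
    by simp
  show ?thesis
  proof (cases "2 \<le> s \<and> \<rho> \<le> s - 1")
    case False
    then show ?thesis using R1 R2 unfolding H2_def \<rho>_def by auto
  next
    case True
    then have s2: "2 \<le> s" and \<rho>s: "\<rho> \<le> s - 1" by auto
    have H: "H2 p q mu s \<rho> = omega2t p q mu s \<rho> powr (-q)" using True unfolding H2_def by simp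
    show ?thesis
    proof (cases "\<rho> < s/2")
      case True
      have "omega2t p q mu s \<rho> powr (-q) = \<rho> powr (-(q*(p-2))) * jb S powr (-(q*(3-p+mu/(p*q))))"
        using om2t_I[of q \<rho> s p mu] f True \<rho>0 unfolding S_def \<rho>_def by simp
      also have "\<dots> \<le> \<rho> powr (-(q*(p-2))) * S powr (-(q*(3-p+mu/(p*q))))"
        using f S0 by (intro mult_left_mono jbn) auto
      finally have "\<rho> * H2 p q mu s \<rho> \<le> \<rho> * (\<rho> powr (-(q*(p-2))) * S powr (-(q*(3-p+mu/(p*q)))))"
        using H \<rho>0 by (intro mult_left_mono) auto
      also have "\<dots> = S powr (-(q*(3-p+mu/(p*q)))) * \<rho> powr (1 - q*(p-2))"
        using mulpow[OF \<rho>0, of "-(q*(p-2))"] by (simp add: mult_ac)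
      finally show ?thesis using R2 unfolding S_def \<rho>_def by simp
    next
      case False
      have e1: "s - \<rho> = 2* s - S" "s + \<rho> = S" unfolding S_def \<rho>_def by auto
      have ge1: "1 \<le> 2* s - S" using \<rho>s e1 by linarith
      have "omega2t p q mu s \<rho> powr (-q) = jb (2* s-S) powr (-(mu/p)) * jb S powr (-q)"
        using om2t_II[of q p s \<rho> mu] f False e1 by simp
      also have "\<dots> \<le> (2* s-S) powr (-(mu/p)) * S powr (-q)"
        using f S0 ge1 by (intro mult_mono jbn) auto
      finally have "\<rho> * H2 p q mu s \<rho> \<le> \<rho> * ((2* s-S) powr (-(mu/p)) * S powr (-q))"
        using H \<rho>0 by (intro mult_left_mono) auto
      also have "\<dots> \<le> S * ((2* s-S) powr (-(mu/p)) * S powr (-q))"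
        using r s unfolding S_def \<rho>_def by (intro mult_right_mono) auto
      also have "\<dots> = S powr (1-q) * (2* s-S) powr (-(mu/p))"
        using mulpow[OF S0, of "-q"] by (simp add: mult_ac)
      finally have A: "\<rho> * H2 p q mu s \<rho> \<le> S powr (1-q) * (2* s-S) powr (-(mu/p))" .
      have "(t+r+1)/2 \<le> s" using ge1 unfolding S_def by simp
      then have "(if (t+r+1)/2 \<le> s \<and> s \<le> t then (t+r) powr (1-q) * (2 * s-(t+r)) powr (-(mu/p)) else 0)
          = S powr (1-q) * (2 * s-S) powr (-(mu/p))" using s unfolding S_def by simp
      then show ?thesis using A R1 unfolding S_def \<rho>_def by linarith
    qed
  qed
qed

lemma Q_bound:
  assumes pr: "prm p q mu" and r: "0 < r" and s: "0 \<le> s" "s \<le> t" and T: "1 \<le> t - r"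
  shows "\<bar>s - (t-r)\<bar> * H2 p q mu s \<bar>s - (t-r)\<bar> \<le>
     (if 0 \<le> s \<and> s \<le> min (2*(t-r)) t then (2*(t-r)/3) powr (-(q*(3-p+mu/(p*q)))) * \<bar>s-(t-r)\<bar> powr (1 - q*(p-2)) else 0)
   + (if ((t-r)+1)/2 \<le> s \<and> s \<le> t-r then (t-r) powr (1-q) * (2* s-(t-r)) powr (-(mu/p)) else 0)
   + (if t-r \<le> s \<and> s \<le> t then (t-r) powr (-(mu/p)) * (2* s-(t-r)) powr (1-q) else 0)"
  (is "?L \<le> ?A + ?B + ?C")
proof -
  note f = prm_facts[OF pr]
  define T where "T = t - r"
  define \<rho> where "\<rho> = \<bar>s - T\<bar>"
  have T1: "1 \<le> T" using T unfolding T_def .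
  have nn: "0 \<le> ?A" "0 \<le> ?B" "0 \<le> ?C" by auto
  show ?thesis
  proof (cases "\<rho> > 0 \<and> 2 \<le> s \<and> \<rho> \<le> s - 1")
    case False
    then have "?L = 0" unfolding H2_def \<rho>_def T_def by auto
    then show ?thesis using nn by linarith
  next
    case True
    then have \<rho>0: "0 < \<rho>" and s2: "2 \<le> s" and \<rho>s: "\<rho> \<le> s - 1" by auto
    have H: "H2 p q mu s \<rho> = omega2t p q mu s \<rho> powr (-q)" using True unfolding H2_def by simp
    show ?thesis
    proof (cases "\<rho> < s/2")
      case True
      have "s - T < s/2" "T - s < s/2" using True unfolding \<rho>_def abs_less_iff by auto
      then have s23: "2*T/3 \<le> s" "s \<le> 2*T" by linarith+
      have sp: "2*T/3 \<le> s + \<rho>" using s23 \<rho>0 by simp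
      have "omega2t p q mu s \<rho> powr (-q) = \<rho> powr (-(q*(p-2))) * jb (s+\<rho>) powr (-(q*(3-p+mu/(p*q))))"
        using om2t_I[of q \<rho> s p mu] f True \<rho>0 by simp
      also have "\<dots> \<le> \<rho> powr (-(q*(p-2))) * (s+\<rho>) powr (-(q*(3-p+mu/(p*q))))"
        using f \<rho>0 s by (intro mult_left_mono jbn) auto
      also have "\<dots> \<le> \<rho> powr (-(q*(p-2))) * (2*T/3) powr (-(q*(3-p+mu/(p*q))))"
        using f T1 sp by (intro mult_left_mono powr_mono2') auto
      finally have "\<rho> * H2 p q mu s \<rho> \<le> \<rho> * (\<rho> powr (-(q*(p-2))) * (2*T/3) powr (-(q*(3-p+mu/(p*q)))))"
        using H \<rho>0 by (intro mult_left_mono) auto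
      also have "\<dots> = (2*T/3) powr (-(q*(3-p+mu/(p*q)))) * \<rho> powr (1 - q*(p-2))"
        using mulpow[OF \<rho>0, of "-(q*(p-2))"] by (simp add: mult_ac)
      finally have "?L \<le> ?A" using s23 s unfolding \<rho>_def T_def by simp
      then show ?thesis using nn by linarith
    next
      case False
      then have II: "s/2 \<le> \<rho>" by simp
      have om: "omega2t p q mu s \<rho> powr (-q) = jb (s-\<rho>) powr (-(mu/p)) * jb (s+\<rho>) powr (-q)"
        using om2t_II[of q p s \<rho> mu] f II by simp
      show ?thesis
      proof (cases "s \<le> T")
        case True
        have e1: "\<rho> = T - s" "s - \<rho> = 2* s - T" "s + \<rho> = T" using True unfolding \<rho>_def by auto
        have ge1: "1 \<le> 2* s - T" using \<rho>s e1 by linarith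
        have "omega2t p q mu s \<rho> powr (-q) \<le> (2* s-T) powr (-(mu/p)) * T powr (-q)"
          unfolding om e1(2,3) using f T1 ge1 by (intro mult_mono jbn) auto
        then have "\<rho> * H2 p q mu s \<rho> \<le> \<rho> * ((2* s-T) powr (-(mu/p)) * T powr (-q))"
          using H \<rho>0 by (intro mult_left_mono) auto
        also have "\<dots> \<le> T * ((2* s-T) powr (-(mu/p)) * T powr (-q))"
          using s e1 by (intro mult_right_mono) auto
        also have "\<dots> = T powr (1-q) * (2* s-T) powr (-(mu/p))"
          using mulpow[of T "-q"] T1 by (simp add: mult_ac)
        finally have "?L \<le> ?B" using ge1 True unfolding \<rho>_def T_def by simp
        then show ?thesis using nn by linarith
      next
        case False
        have e1: "\<rho> = s - T" "s - \<rho> = T" "s + \<rho> = 2* s - T" using False unfolding \<rho>_def by auto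
        have ge1: "1 \<le> 2* s - T" using False T1 by linarith
        have "omega2t p q mu s \<rho> powr (-q) \<le> T powr (-(mu/p)) * (2* s-T) powr (-q)"
          unfolding om e1(2,3) using f T1 ge1 by (intro mult_mono jbn) auto
        then have "\<rho> * H2 p q mu s \<rho> \<le> \<rho> * (T powr (-(mu/p)) * (2* s-T) powr (-q))"
          using H \<rho>0 by (intro mult_left_mono) auto
        also have "\<dots> \<le> (2* s-T) * (T powr (-(mu/p)) * (2* s-T) powr (-q))"
          using s e1 T1 by (intro mult_right_mono) auto
        also have "\<dots> = T powr (-(mu/p)) * (2* s-T) powr (1-q)"
          using mulpow[of "2* s-T" "-q"] ge1 by (simp add: mult_ac)
        finally have "?L \<le> ?C" using False s unfolding \<rho>_def T_def by simp
        then show ?thesis using nn by linarith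
      qed
    qed
  qed
qed

definition E2 :: "real \<Rightarrow> real \<Rightarrow> real \<Rightarrow> real \<Rightarrow> real \<Rightarrow> real" where
  "E2 p q mu t r =
     (t+r) powr (-(q*(3-p+mu/(p*q)))) * (t+r) powr (2 - q*(p-2)) / (2 - q*(p-2))
   + (t+r) powr (1-q) * (t-r) powr (1-mu/p) / (2*(1-mu/p))
   + (2*(t-r)/3) powr (-(q*(3-p+mu/(p*q)))) * (2 * (t-r) powr (2 - q*(p-2)) / (2 - q*(p-2)))
   + (t-r) powr (1-q) * (t-r) powr (1-mu/p) / (2*(1-mu/p))
   + (t-r) powr (-(mu/p)) * (t+r) powr (2-q) / (2*(2-q))"

lemma c2_lt: "prm p q mu \<Longrightarrow> q*(p-2) < 2"
proof -
  assume pr: "prm p q mu"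
  note f = prm_facts[OF pr]
  have "q*(p-2) < 2*1" using f by (intro mult_strict_mono) auto
  then show ?thesis by simp
qed

lemma e_lt: "prm p q mu \<Longrightarrow> mu/p < 1"
  using prm_facts[of p q mu] by (simp add: divide_less_eq)

lemma psi2_int:
  assumes pr: "prm p q mu" and r: "0 < r" and T: "1 \<le> t - r"
  shows "\<exists>V. ((\<lambda>s. (t+r) powr (-(q*(3-p+mu/(p*q)))) * (t+r-s) powr (1 - q*(p-2))
     + (if (t+r+1)/2 \<le> s \<and> s \<le> t then (t+r) powr (1-q) * (2 * s-(t+r)) powr (-(mu/p)) else 0)
     + ((if 0 \<le> s \<and> s \<le> min (2*(t-r)) t then (2*(t-r)/3) powr (-(q*(3-p+mu/(p*q)))) * \<bar>s-(t-r)\<bar> powr (1 - q*(p-2)) else 0)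
   + (if ((t-r)+1)/2 \<le> s \<and> s \<le> t-r then (t-r) powr (1-q) * (2 * s-(t-r)) powr (-(mu/p)) else 0)
   + (if t-r \<le> s \<and> s \<le> t then (t-r) powr (-(mu/p)) * (2 * s-(t-r)) powr (1-q) else 0)))
     has_integral V) {0..t} \<and> V \<le> E2 p q mu t r"
proof -
  note f = prm_facts[OF pr]
  have c2: "q*(p-2) < 2" by (rule c2_lt[OF pr])
  have e1: "mu/p < 1" by (rule e_lt[OF pr])
  have ep: "0 < mu/p" using f by simp
  define S where "S = t + r"
  define T where "T = t - r"
  define qb where "qb = q*(3-p+mu/(p*q))"
  define c where "c = q*(p-2)"
  define e where "e = mu/p"
  have T1: "1 \<le> T" using T unfolding T_def .
  have t0: "0 \<le> t" "T \<le> t" "t \<le> S" "0 < S" using T1 r unfolding T_def S_def by auto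
  have c2': "c < 2" "0 < 2 - c" using c2 unfolding c_def by auto
  have e1': "e < 1" "0 < e" using e1 ep unfolding e_def by auto
  have I1a: "((\<lambda>s. ((-1) * s + S) powr (1-c)) has_integral
      (((-1) * t + S) powr (1-c+1) - ((-1)*0 + S) powr (1-c+1)) / ((-1) * (1-c+1))) {0..t}"
    by (rule pow_has_int) (use t0 c2' r in \<open>auto simp: S_def\<close>)
  have I1: "((\<lambda>s. S powr (-qb) * (S - s) powr (1-c)) has_integral
      S powr (-qb) * ((S powr (2-c) - r powr (2-c)) / (2-c))) {0..t}"
  proof -
    have eq: "(((-1) * t + S) powr (1-c+1) - ((-1)*0 + S) powr (1-c+1)) / ((-1) * (1-c+1))
        = (S powr (2-c) - r powr (2-c)) / (2-c)"
      using c2' by (simp add: S_def field_simps)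
    show ?thesis using has_integral_mult_right[OF I1a, of "S powr (-qb)"] unfolding eq by simp
  qed
  have V1: "S powr (-qb) * ((S powr (2-c) - r powr (2-c)) / (2-c)) \<le> S powr (-qb) * S powr (2-c) / (2-c)"
    using c2' by (simp add: divide_right_mono mult_left_mono)
  have I2a: "((\<lambda>s. (2 * s + (-S)) powr (-e)) has_integral
      ((2 * t + (-S)) powr (-e+1) - (2 * ((S+1)/2) + (-S)) powr (-e+1)) / (2 * (-e+1))) {(S+1)/2..t}"
    by (rule pow_has_int) (use t0 e1' T1 in \<open>auto simp: S_def T_def\<close>)
  have I2: "((\<lambda>s. if (S+1)/2 \<le> s \<and> s \<le> t then S powr (1-q) * (2 * s - S) powr (-e) else 0) has_integral
      S powr (1-q) * ((T powr (1-e) - 1) / (2*(1-e)))) {0..t}"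
  proof -
    have eq: "((2 * t + (-S)) powr (-e+1) - (2 * ((S+1)/2) + (-S)) powr (-e+1)) / (2 * (-e+1))
       = (T powr (1-e) - 1) / (2*(1-e))"
    proof -
      have h: "2 * ((S+1)/2) + (-S) = 1" "2 * t + (-S) = T" by (simp_all add: S_def T_def field_simps)
      show ?thesis unfolding h by (simp add: algebra_simps)
    qed
    have "((\<lambda>s. S powr (1-q) * (2 * s - S) powr (-e)) has_integral
      S powr (1-q) * ((T powr (1-e) - 1) / (2*(1-e)))) {(S+1)/2..t}"
      using has_integral_mult_right[OF I2a, of "S powr (1-q)"] unfolding eq by simp
    note W = this
    show ?thesis by (rule has_int_window[OF _ _ _ W]) (use t0 T1 in \<open>auto simp: S_def T_def\<close>)
  qed
  have V2: "S powr (1-q) * ((T powr (1-e) - 1) / (2*(1-e))) \<le> S powr (1-q) * T powr (1-e) / (2*(1-e))"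
    using e1' by (simp add: divide_right_mono mult_left_mono)
  define b where "b = min (2*T) t"
  have I3a: "((\<lambda>s. \<bar>s - T\<bar> powr (1-c)) has_integral ((T-0) powr (1-c+1) + (b-T) powr (1-c+1))/(1-c+1)) {0..b}"
    by (rule abs_pow_has_int) (use t0 T1 c2' in \<open>auto simp: b_def\<close>)
  have I3: "((\<lambda>s. if 0 \<le> s \<and> s \<le> b then (2*T/3) powr (-qb) * \<bar>s - T\<bar> powr (1-c) else 0) has_integral
      (2*T/3) powr (-qb) * ((T powr (2-c) + (b-T) powr (2-c))/(2-c))) {0..t}"
    by (rule has_int_window) (use has_integral_mult_right[OF I3a, of "(2*T/3) powr (-qb)"] t0 T1 in \<open>auto simp: b_def\<close>)
  have V3: "(2*T/3) powr (-qb) * ((T powr (2-c) + (b-T) powr (2-c))/(2-c)) \<le> (2*T/3) powr (-qb) * (2 * T powr (2-c) / (2-c))"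
  proof -
    have "(b-T) powr (2-c) \<le> T powr (2-c)" using t0 T1 c2' by (intro powr_mono2) (auto simp: b_def)
    then show ?thesis using c2' by (intro mult_left_mono divide_right_mono) auto
  qed
  have I4a: "((\<lambda>s. (2 * s + (-T)) powr (-e)) has_integral
      ((2 * T + (-T)) powr (-e+1) - (2 * ((T+1)/2) + (-T)) powr (-e+1)) / (2 * (-e+1))) {(T+1)/2..T}"
    by (rule pow_has_int) (use t0 e1' T1 in auto)
  have I4: "((\<lambda>s. if (T+1)/2 \<le> s \<and> s \<le> T then T powr (1-q) * (2 * s - T) powr (-e) else 0) has_integral
      T powr (1-q) * ((T powr (1-e) - 1) / (2*(1-e)))) {0..t}"
  proof -
    have eq: "((2 * T + (-T)) powr (-e+1) - (2 * ((T+1)/2) + (-T)) powr (-e+1)) / (2 * (-e+1))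
       = (T powr (1-e) - 1) / (2*(1-e))"
    proof -
      have h: "2 * ((T+1)/2) + (-T) = 1" "2 * T + (-T) = T" by (simp_all add: field_simps)
      show ?thesis unfolding h by (simp add: algebra_simps)
    qed
    have "((\<lambda>s. T powr (1-q) * (2 * s - T) powr (-e)) has_integral
      T powr (1-q) * ((T powr (1-e) - 1) / (2*(1-e)))) {(T+1)/2..T}"
      using has_integral_mult_right[OF I4a, of "T powr (1-q)"] unfolding eq by simp
    note W = this
    show ?thesis by (rule has_int_window[OF _ _ _ W]) (use t0 T1 in auto)
  qed
  have V4: "T powr (1-q) * ((T powr (1-e) - 1) / (2*(1-e))) \<le> T powr (1-q) * T powr (1-e) / (2*(1-e))"
    using e1' by (simp add: divide_right_mono mult_left_mono)
  have I5a: "((\<lambda>s. (2 * s + (-T)) powr (1-q)) has_integral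
      ((2 * t + (-T)) powr (1-q+1) - (2 * T + (-T)) powr (1-q+1)) / (2 * (1-q+1))) {T..t}"
    by (rule pow_has_int) (use t0 f T1 in auto)
  have I5: "((\<lambda>s. if T \<le> s \<and> s \<le> t then T powr (-e) * (2 * s - T) powr (1-q) else 0) has_integral
      T powr (-e) * ((S powr (2-q) - T powr (2-q)) / (2*(2-q)))) {0..t}"
  proof -
    have eq: "((2 * t + (-T)) powr (1-q+1) - (2 * T + (-T)) powr (1-q+1)) / (2 * (1-q+1))
       = (S powr (2-q) - T powr (2-q)) / (2*(2-q))"
    proof -
      have h: "2 * t + (-T) = S" "2 * T + (-T) = T" by (simp_all add: S_def T_def)
      show ?thesis unfolding h by (simp add: algebra_simps)
    qed
    have "((\<lambda>s. T powr (-e) * (2 * s - T) powr (1-q)) has_integral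
      T powr (-e) * ((S powr (2-q) - T powr (2-q)) / (2*(2-q)))) {T..t}"
      using has_integral_mult_right[OF I5a, of "T powr (-e)"] unfolding eq by simp
    note W = this
    show ?thesis by (rule has_int_window[OF _ _ _ W]) (use t0 T1 in auto)
  qed
  have V5: "T powr (-e) * ((S powr (2-q) - T powr (2-q)) / (2*(2-q))) \<le> T powr (-e) * S powr (2-q) / (2*(2-q))"
    using f by (simp add: divide_right_mono mult_left_mono)
  have all: "((\<lambda>s. S powr (-qb) * (S - s) powr (1-c)
     + (if (S+1)/2 \<le> s \<and> s \<le> t then S powr (1-q) * (2 * s - S) powr (-e) else 0)
     + ((if 0 \<le> s \<and> s \<le> b then (2*T/3) powr (-qb) * \<bar>s - T\<bar> powr (1-c) else 0)
      + (if (T+1)/2 \<le> s \<and> s \<le> T then T powr (1-q) * (2 * s - T) powr (-e) else 0)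
      + (if T \<le> s \<and> s \<le> t then T powr (-e) * (2 * s - T) powr (1-q) else 0)))
     has_integral (S powr (-qb) * ((S powr (2-c) - r powr (2-c)) / (2-c))
       + S powr (1-q) * ((T powr (1-e) - 1) / (2*(1-e)))
       + ((2*T/3) powr (-qb) * ((T powr (2-c) + (b-T) powr (2-c))/(2-c))
         + T powr (1-q) * ((T powr (1-e) - 1) / (2*(1-e)))
         + T powr (-e) * ((S powr (2-q) - T powr (2-q)) / (2*(2-q)))))) {0..t}"
    by (intro has_integral_add I1 I2 I3 I4 I5)
  have Vle: "S powr (-qb) * ((S powr (2-c) - r powr (2-c)) / (2-c))
       + S powr (1-q) * ((T powr (1-e) - 1) / (2*(1-e)))
       + ((2*T/3) powr (-qb) * ((T powr (2-c) + (b-T) powr (2-c))/(2-c))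
         + T powr (1-q) * ((T powr (1-e) - 1) / (2*(1-e)))
         + T powr (-e) * ((S powr (2-q) - T powr (2-q)) / (2*(2-q)))) \<le> E2 p q mu t r"
    unfolding E2_def using V1 V2 V3 V4 V5 unfolding S_def T_def qb_def c_def e_def by linarith
  show ?thesis using all Vle unfolding S_def T_def qb_def c_def e_def b_def by blast
qed

lemma pw: "0 < (x::real) \<Longrightarrow> x powr a * x powr b = x powr (a+b)"
  by (simp add: powr_add)

lemma tp: "0 < (T::real) \<Longrightarrow> T \<le> S \<Longrightarrow> 0 \<le> a \<Longrightarrow> T powr a * S powr (-a) \<le> 1"
proof -
  assume T: "0 < T" "T \<le> S" "0 \<le> a"
  have "S powr (-a) \<le> T powr (-a)" using T by (intro powr_mono2') auto
  then have "T powr a * S powr (-a) \<le> T powr a * T powr (-a)" by (intro mult_left_mono) auto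
  also have "\<dots> = 1" using T by (simp add: pw)
  finally show ?thesis .
qed

lemma weightA:
  fixes T S W e q c qb k :: real
  assumes T: "1 \<le> T" "T \<le> S" "S \<le> 3*T"
    and ex: "k = e + q - 2" "2 - c - qb = -k" "k - qb + 2 - c = 0"
    and par: "0 < e" "e < 1" "1 < q" "q < 2" "c < 2" "0 < k"
    and W: "0 \<le> W" "W \<le> 2 powr k * T powr k"
  shows "W * (S powr (-qb) * S powr (2-c) / (2-c) + S powr (1-q) * T powr (1-e) / (2*(1-e))
     + (2*T/3) powr (-qb) * (2 * T powr (2-c) / (2-c)) + T powr (1-q) * T powr (1-e) / (2*(1-e))
     + T powr (-e) * S powr (2-q) / (2*(2-q)))
   \<le> 2 powr k * (1/(2-c) + 1/(2*(1-e)) + (2/3) powr (-qb) * 2 / (2-c) + 1/(2*(1-e)) + 3 powr (2-q)/(2*(2-q)))"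
proof -
  have T0: "0 < T" "0 < S" using T by auto
  define E1 where "E1 = S powr (-qb) * S powr (2-c) / (2-c)"
  define E2 where "E2 = S powr (1-q) * T powr (1-e) / (2*(1-e))"
  define E3 where "E3 = (2*T/3) powr (-qb) * (2 * T powr (2-c) / (2-c))"
  define E4 where "E4 = T powr (1-q) * T powr (1-e) / (2*(1-e))"
  define E5 where "E5 = T powr (-e) * S powr (2-q) / (2*(2-q))"
  have Enn: "0 \<le> E1 + E2 + E3 + E4 + E5" unfolding E1_def E2_def E3_def E4_def E5_def
    using par by (intro add_nonneg_nonneg) auto
  have b1: "T powr k * E1 \<le> 1/(2-c)"
  proof -
    have "S powr (-qb) * S powr (2-c) = S powr (-qb + (2-c))" using T0 by (simp add: pw)
    also have "-qb + (2-c) = -k" using ex by simp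
    finally have "T powr k * E1 = (T powr k * S powr (-k)) / (2-c)"
      unfolding E1_def by simp
    also have "\<dots> \<le> 1/(2-c)" using tp[of T S k] T0 T par by (intro divide_right_mono) auto
    finally show ?thesis .
  qed
  have b2: "T powr k * E2 \<le> 1/(2*(1-e))"
  proof -
    have "S powr (1-q) \<le> T powr (1-q)" using T0 T par by (intro powr_mono2') auto
    then have "T powr k * E2 \<le> T powr k * (T powr (1-q) * T powr (1-e) / (2*(1-e)))"
      unfolding E2_def using par by (intro mult_left_mono divide_right_mono mult_right_mono) auto
    also have "\<dots> = T powr (k + (1-q) + (1-e)) / (2*(1-e))" using T0 by (simp add: pw add_ac mult.assoc[symmetric])
    also have "k + (1-q) + (1-e) = 0" using ex by simp
    finally show ?thesis using T0 by simp
  qed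
  have b3: "T powr k * E3 \<le> (2/3) powr (-qb) * 2 / (2-c)"
  proof -
    have "(2*T/3) powr (-qb) = (2/3) powr (-qb) * T powr (-qb)" using T0
      by (simp add: powr_mult[symmetric])
    then have "T powr k * E3 = (2/3) powr (-qb) * 2 * (T powr k * T powr (-qb) * T powr (2-c)) / (2-c)"
      unfolding E3_def by (simp add: mult_ac)
    also have "T powr k * T powr (-qb) * T powr (2-c) = T powr (k - qb + (2 - c))" using T0 by (simp add: pw)
    also have "k - qb + (2-c) = 0" using ex by simp
    finally show ?thesis using T0 by simp
  qed
  have b4: "T powr k * E4 \<le> 1/(2*(1-e))"
  proof -
    have "T powr k * E4 = T powr (k + (1-q) + (1-e)) / (2*(1-e))" unfolding E4_def using T0 by (simp add: pw add_ac mult.assoc[symmetric])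
    also have "k + (1-q) + (1-e) = 0" using ex by simp
    finally show ?thesis using T0 by simp
  qed
  have b5: "T powr k * E5 \<le> 3 powr (2-q)/(2*(2-q))"
  proof -
    have m: "T powr (-(2-q)) * S powr (2-q) \<le> 3 powr (2-q)"
    proof -
      have "S powr (2-q) \<le> (3*T) powr (2-q)" using T0 T par by (intro powr_mono2) auto
      then have "T powr (-(2-q)) * S powr (2-q) \<le> T powr (-(2-q)) * (3*T) powr (2-q)" by (intro mult_left_mono) auto
      also have "\<dots> = 3 powr (2-q) * (T powr (-(2-q)) * T powr (2-q))" using T0 by (simp add: powr_mult mult_ac)
      also have "T powr (-(2-q)) * T powr (2-q) = 1" using T0 by (simp add: pw)
      finally show ?thesis by simp
    qed
    have "T powr k * E5 = T powr (k - e) * S powr (2-q) / (2*(2-q))" unfolding E5_def using T0 by (simp add: pw mult.assoc[symmetric])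
    also have "k - e = -(2-q)" using ex by simp
    finally have eq: "T powr k * E5 = T powr (-(2-q)) * S powr (2-q) / (2*(2-q))" .
    show ?thesis unfolding eq using m par by (intro divide_right_mono) auto
  qed
  have "W * (E1 + E2 + E3 + E4 + E5) \<le> 2 powr k * T powr k * (E1 + E2 + E3 + E4 + E5)"
    using W Enn by (intro mult_right_mono) auto
  also have "\<dots> = 2 powr k * (T powr k * E1 + T powr k * E2 + T powr k * E3 + T powr k * E4 + T powr k * E5)"
    by (simp add: algebra_simps)
  also have "\<dots> \<le> 2 powr k * (1/(2-c) + 1/(2*(1-e)) + (2/3) powr (-qb) * 2 / (2-c) + 1/(2*(1-e)) + 3 powr (2-q)/(2*(2-q)))"
    using b1 b2 b3 b4 b5 by (intro mult_left_mono) auto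
  finally show ?thesis unfolding E1_def E2_def E3_def E4_def E5_def .
qed

lemma weightB:
  fixes T S W e q c qb k L :: real
  assumes T: "1 \<le> T" "T \<le> S"
    and ex: "k = e + q - 2" "2 - c - qb = -k" "k - qb + 2 - c = 0"
    and par: "0 < e" "e < 1" "1 < q" "q < 2" "c < 2" "0 < k" "0 \<le> L"
    and W: "0 \<le> W" "W \<le> L * (T powr e * S powr (q-2))"
  shows "W * (S powr (-qb) * S powr (2-c) / (2-c) + S powr (1-q) * T powr (1-e) / (2*(1-e))
     + (2*T/3) powr (-qb) * (2 * T powr (2-c) / (2-c)) + T powr (1-q) * T powr (1-e) / (2*(1-e))
     + T powr (-e) * S powr (2-q) / (2*(2-q)))
   \<le> L * (1/(2-c) + 1/(2*(1-e)) + (2/3) powr (-qb) * 2 / (2-c) + 1/(2*(1-e)) + 1/(2*(2-q)))"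
proof -
  have T0: "0 < T" "0 < S" using T by auto
  define M where "M = T powr e * S powr (q-2)"
  define E1 where "E1 = S powr (-qb) * S powr (2-c) / (2-c)"
  define E2 where "E2 = S powr (1-q) * T powr (1-e) / (2*(1-e))"
  define E3 where "E3 = (2*T/3) powr (-qb) * (2 * T powr (2-c) / (2-c))"
  define E4 where "E4 = T powr (1-q) * T powr (1-e) / (2*(1-e))"
  define E5 where "E5 = T powr (-e) * S powr (2-q) / (2*(2-q))"
  have Enn: "0 \<le> E1 + E2 + E3 + E4 + E5" unfolding E1_def E2_def E3_def E4_def E5_def
    using par by (intro add_nonneg_nonneg) auto
  have b1: "M * E1 \<le> 1/(2-c)"
  proof -
    have "M * E1 = T powr e * (S powr (q-2) * S powr (-qb) * S powr (2-c)) / (2-c)"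
      unfolding M_def E1_def by (simp add: mult_ac)
    also have "S powr (q-2) * S powr (-qb) * S powr (2-c) = S powr (q-2 + -qb + (2-c))" using T0 by (simp add: pw)
    also have "q-2 + -qb + (2-c) = -e" using ex by simp
    also have "T powr e * S powr (-e) / (2-c) \<le> 1/(2-c)"
      using tp[of T S e] T0 T par by (intro divide_right_mono) auto
    finally show ?thesis .
  qed
  have b2: "M * E2 \<le> 1/(2*(1-e))"
  proof -
    have "M * E2 = (T powr e * T powr (1-e)) * (S powr (q-2) * S powr (1-q)) / (2*(1-e))"
      unfolding M_def E2_def by (simp add: mult_ac)
    also have "T powr e * T powr (1-e) = T powr 1" using T0 by (simp add: pw)
    also have "S powr (q-2) * S powr (1-q) = S powr (-1)" using T0 by (simp add: pw)
    also have "T powr 1 * S powr (-1) / (2*(1-e)) \<le> 1/(2*(1-e))"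
      using tp[of T S 1] T0 T par by (intro divide_right_mono) auto
    finally show ?thesis .
  qed
  have b3: "M * E3 \<le> (2/3) powr (-qb) * 2 / (2-c)"
  proof -
    have "(2*T/3) powr (-qb) = (2/3) powr (-qb) * T powr (-qb)" using T0
      by (simp add: powr_mult[symmetric])
    then have "M * E3 = (2/3) powr (-qb) * 2 * ((T powr e * T powr (-qb) * T powr (2-c)) * S powr (q-2)) / (2-c)"
      unfolding M_def E3_def by (simp add: mult_ac)
    also have "T powr e * T powr (-qb) * T powr (2-c) = T powr (e + -qb + (2-c))" using T0 by (simp add: pw)
    also have "e + -qb + (2-c) = 2 - q" using ex by simp
    also have "S powr (q-2) = S powr (-(2-q))" by simp
    also have "(2/3) powr (-qb) * 2 * (T powr (2-q) * S powr (-(2-q))) / (2-c) \<le> (2/3) powr (-qb) * 2 * 1 / (2-c)"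
      using tp[of T S "2-q"] T0 T par by (intro divide_right_mono mult_left_mono) auto
    finally show ?thesis by simp
  qed
  have b4: "M * E4 \<le> 1/(2*(1-e))"
  proof -
    have "M * E4 = (T powr e * T powr (1-q) * T powr (1-e)) * S powr (q-2) / (2*(1-e))"
      unfolding M_def E4_def by (simp add: mult_ac)
    also have "T powr e * T powr (1-q) * T powr (1-e) = T powr (e + (1-q) + (1-e))" using T0 by (simp add: pw)
    also have "e + (1-q) + (1-e) = 2 - q" by simp
    also have "S powr (q-2) = S powr (-(2-q))" by simp
    also have "T powr (2-q) * S powr (-(2-q)) / (2*(1-e)) \<le> 1/(2*(1-e))"
      using tp[of T S "2-q"] T0 T par by (intro divide_right_mono) auto
    finally show ?thesis .
  qed
  have b5: "M * E5 \<le> 1/(2*(2-q))"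
  proof -
    have "M * E5 = (T powr e * T powr (-e)) * (S powr (q-2) * S powr (2-q)) / (2*(2-q))"
      unfolding M_def E5_def by (simp add: mult_ac)
    also have "T powr e * T powr (-e) = 1" using T0 by (simp add: pw)
    also have "S powr (q-2) * S powr (2-q) = 1" using T0 by (simp add: pw)
    finally show ?thesis by simp
  qed
  have "W * (E1 + E2 + E3 + E4 + E5) \<le> L * M * (E1 + E2 + E3 + E4 + E5)"
    using W Enn unfolding M_def by (intro mult_right_mono) auto
  also have "\<dots> = L * (M * E1 + M * E2 + M * E3 + M * E4 + M * E5)"
    by (simp add: algebra_simps)
  also have "\<dots> \<le> L * (1/(2-c) + 1/(2*(1-e)) + (2/3) powr (-qb) * 2 / (2-c) + 1/(2*(1-e)) + 1/(2*(2-q)))"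
    using b1 b2 b3 b4 b5 par by (intro mult_left_mono) auto
  finally show ?thesis unfolding E1_def E2_def E3_def E4_def E5_def .
qed

lemma H2_nn: "0 \<le> H2 p q mu s \<rho>" unfolding H2_def by simp

lemma Kplus_bound:
  assumes pr: "prm p q mu" and K: "0 \<le> K"
    and Fb: "\<forall>s \<rho>. \<rho> \<noteq> 0 \<longrightarrow> \<bar>F s \<rho>\<bar> \<le> K * H2 p q mu s \<bar>\<rho>\<bar>"
    and r: "0 < r" and T: "1 \<le> t - r"
  shows "\<bar>Kplus F t r\<bar> \<le> K * E2 p q mu t r / 2"
proof -
  obtain V where HV: "((\<lambda>s. (t+r) powr (-(q*(3-p+mu/(p*q)))) * (t+r-s) powr (1 - q*(p-2))
     + (if (t+r+1)/2 \<le> s \<and> s \<le> t then (t+r) powr (1-q) * (2 * s-(t+r)) powr (-(mu/p)) else 0)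
     + ((if 0 \<le> s \<and> s \<le> min (2*(t-r)) t then (2*(t-r)/3) powr (-(q*(3-p+mu/(p*q)))) * \<bar>s-(t-r)\<bar> powr (1 - q*(p-2)) else 0)
   + (if ((t-r)+1)/2 \<le> s \<and> s \<le> t-r then (t-r) powr (1-q) * (2 * s-(t-r)) powr (-(mu/p)) else 0)
   + (if t-r \<le> s \<and> s \<le> t then (t-r) powr (-(mu/p)) * (2 * s-(t-r)) powr (1-q) else 0)))
     has_integral V) {0..t}" and VE: "V \<le> E2 p q mu t r"
    using psi2_int[OF pr r T] by blast
  define \<psi> where "\<psi> = (\<lambda>s. (t+r) powr (-(q*(3-p+mu/(p*q)))) * (t+r-s) powr (1 - q*(p-2))
     + (if (t+r+1)/2 \<le> s \<and> s \<le> t then (t+r) powr (1-q) * (2 * s-(t+r)) powr (-(mu/p)) else 0)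
     + ((if 0 \<le> s \<and> s \<le> min (2*(t-r)) t then (2*(t-r)/3) powr (-(q*(3-p+mu/(p*q)))) * \<bar>s-(t-r)\<bar> powr (1 - q*(p-2)) else 0)
   + (if ((t-r)+1)/2 \<le> s \<and> s \<le> t-r then (t-r) powr (1-q) * (2 * s-(t-r)) powr (-(mu/p)) else 0)
   + (if t-r \<le> s \<and> s \<le> t then (t-r) powr (-(mu/p)) * (2 * s-(t-r)) powr (1-q) else 0)))"
  have HV': "(\<psi> has_integral V) {0..t}" using HV unfolding \<psi>_def .
  have pt: "\<bar>(r + t - s) * F s (r + t - s) + (r - t + s) * F s (r - t + s)\<bar> \<le> K * \<psi> s"
    if s: "s \<in> {0..t} - {}" for s
  proof -
    have s0: "0 \<le> s" "s \<le> t" using s by auto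
    have \<rho>0: "0 < t + r - s" using s0 r by simp
    have a1: "\<bar>(r + t - s) * F s (r + t - s)\<bar> \<le> K * ((t+r-s) * H2 p q mu s (t+r-s))"
    proof -
      have "\<bar>F s (t+r-s)\<bar> \<le> K * H2 p q mu s (t+r-s)" using spec[OF spec[OF Fb, of s], of "t+r-s"] \<rho>0 by simp
      then have m: "(t+r-s) * \<bar>F s (t+r-s)\<bar> \<le> (t+r-s) * (K * H2 p q mu s (t+r-s))"
        using \<rho>0 by (intro mult_left_mono) auto
      have eq2: "r + t - s = t + r - s" by simp
      show ?thesis unfolding eq2 abs_mult using m \<rho>0 by (simp add: mult_ac)
    qed
    have a2: "\<bar>(r - t + s) * F s (r - t + s)\<bar> \<le> K * (\<bar>s - (t-r)\<bar> * H2 p q mu s \<bar>s - (t-r)\<bar>)"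
    proof (cases "r - t + s = 0")
      case True
      then show ?thesis using K H2_nn by simp
    next
      case False
      have eq: "r - t + s = s - (t - r)" by simp
      have "\<bar>F s (s-(t-r))\<bar> \<le> K * H2 p q mu s \<bar>s-(t-r)\<bar>"
        using spec[OF spec[OF Fb, of s], of "s-(t-r)"] False eq by simp
      then have "\<bar>s-(t-r)\<bar> * \<bar>F s (s-(t-r))\<bar> \<le> \<bar>s-(t-r)\<bar> * (K * H2 p q mu s \<bar>s-(t-r)\<bar>)"
        by (intro mult_left_mono) auto
      then show ?thesis unfolding eq abs_mult by (simp add: mult_ac)
    qed
    have "\<bar>(r + t - s) * F s (r + t - s) + (r - t + s) * F s (r - t + s)\<bar>
       \<le> K * ((t+r-s) * H2 p q mu s (t+r-s)) + K * (\<bar>s - (t-r)\<bar> * H2 p q mu s \<bar>s - (t-r)\<bar>)"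
      using a1 a2 by linarith
    also have "\<dots> \<le> K * \<psi> s"
    proof -
      have "(t+r-s) * H2 p q mu s (t+r-s) + \<bar>s - (t-r)\<bar> * H2 p q mu s \<bar>s - (t-r)\<bar> \<le> \<psi> s"
        using P_bound[OF pr r s0] Q_bound[OF pr r s0 T] unfolding \<psi>_def by linarith
      from mult_left_mono[OF this K] show ?thesis by (simp add: distrib_left)
    qed
    finally show ?thesis .
  qed
  have psinn: "0 \<le> \<psi> s" for s unfolding \<psi>_def by (intro add_nonneg_nonneg) auto
  have V0: "0 \<le> V" using has_integral_nonneg[OF HV'] psinn by auto
  have "\<bar>integral {0..t} (\<lambda>s. (r + t - s) * F s (r + t - s) + (r - t + s) * F s (r - t + s))\<bar> \<le> K * V"
    by (rule int_bound[OF has_integral_mult_right[OF HV'] _ pt]) (use K V0 in auto)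
  then have "\<bar>Kplus F t r\<bar> \<le> K * V / 2" unfolding Kplus_def by simp
  also have "\<dots> \<le> K * E2 p q mu t r / 2" using VE K by (intro divide_right_mono mult_left_mono) auto
  finally show ?thesis .
qed

lemma exps:
  assumes pr: "prm p q mu"
  shows "2 - q*(p-2) - q*(3-p+mu/(p*q)) = -(mu/p + q - 2)"
    "(mu/p + q - 2) - q*(3-p+mu/(p*q)) + 2 - q*(p-2) = 0"
    "0 < mu/p + q - 2" "0 < mu/p"
proof -
  note f = prm_facts[OF pr]
  have qq: "q * (mu/(p*q)) = mu/p" using f by (simp add: field_simps)
  show "2 - q*(p-2) - q*(3-p+mu/(p*q)) = -(mu/p + q - 2)" using qq by (simp add: algebra_simps)
  then show "(mu/p + q - 2) - q*(3-p+mu/(p*q)) + 2 - q*(p-2) = 0" by simp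
  have "mu/p + q - 2 = (mu + p*q - 2*p)/p" using f by (simp add: field_simps)
  moreover have "0 < mu + p*q - 2*p" using f by linarith
  ultimately show "0 < mu/p + q - 2" using f by simp
  show "0 < mu/p" using f by simp
qed

lemma jb_pow_le: "1 \<le> x \<Longrightarrow> 0 \<le> a \<Longrightarrow> jb x powr a \<le> 2 powr a * x powr a"
proof -
  assume x: "1 \<le> x" and a: "0 \<le> a"
  have "jb x powr a \<le> (2*x) powr a" using jb_le2[of x] x a jb_pos[of x] by (intro powr_mono2) auto
  also have "\<dots> = 2 powr a * x powr a" using x by (simp add: powr_mult)
  finally show ?thesis .
qed

lemma part2_core:
  assumes pr: "prm p q mu"
  shows "\<exists>C>0. \<forall>F K t r. 0 \<le> K \<longrightarrow> (\<forall>s \<rho>. \<rho> \<noteq> 0 \<longrightarrow> \<bar>F s \<rho>\<bar> \<le> K * H2 p q mu s \<bar>\<rho>\<bar>)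
     \<longrightarrow> 0 \<le> t \<longrightarrow> 0 \<le> r \<longrightarrow> \<bar>omega1t p q mu t r / r * Kplus F t r\<bar> \<le> C * K"
proof -
  note f = prm_facts[OF pr]
  note ex = exps[OF pr]
  define e where "e = mu/p"
  define k where "k = mu/p + q - 2"
  define c where "c = q*(p-2)"
  define qb where "qb = q*(3-p+mu/(p*q))"
  define L where "L = 3 * 2 powr (e + q - 1)"
  have c2: "c < 2" unfolding c_def by (rule c2_lt[OF pr])
  have e1: "e < 1" unfolding e_def by (rule e_lt[OF pr])
  have e0: "0 < e" "0 < k" using ex unfolding e_def k_def by auto
  have L0: "0 \<le> L" unfolding L_def by simp
  define CA where "CA = 2 powr k * (1/(2-c) + 1/(2*(1-e)) + (2/3) powr (-qb) * 2 / (2-c) + 1/(2*(1-e)) + 3 powr (2-q)/(2*(2-q)))"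
  define CB where "CB = L * (1/(2-c) + 1/(2*(1-e)) + (2/3) powr (-qb) * 2 / (2-c) + 1/(2*(1-e)) + 1/(2*(2-q)))"
  have CA0: "0 \<le> CA" unfolding CA_def using c2 e1 f by (intro mult_nonneg_nonneg add_nonneg_nonneg) auto
  have CB0: "0 \<le> CB" unfolding CB_def using c2 e1 f L0 by (intro mult_nonneg_nonneg add_nonneg_nonneg) auto
  define C where "C = CA + CB + 1"
  have C0: "0 < C" using CA0 CB0 unfolding C_def by linarith
  show ?thesis
  proof (intro exI[of _ C] conjI allI impI)
    show "0 < C" by (rule C0)
    fix F :: "real \<Rightarrow> real \<Rightarrow> real" and K t r :: real
    assume K: "0 \<le> K" and Fb: "\<forall>s \<rho>. \<rho> \<noteq> 0 \<longrightarrow> \<bar>F s \<rho>\<bar> \<le> K * H2 p q mu s \<bar>\<rho>\<bar>"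
      and t: "0 \<le> t" and r: "0 \<le> r"
    show "\<bar>omega1t p q mu t r / r * Kplus F t r\<bar> \<le> C * K"
    proof (cases "r = 0")
      case True
      then show ?thesis using C0 K by simp
    next
      case False
      then have r0: "0 < r" using r by simp
      show ?thesis
      proof (cases "1 \<le> t - r")
        case False
        have z: "(r + t - s) * F s (r + t - s) + (r - t + s) * F s (r - t + s) = 0" if s: "s \<in> {0..t}" for s
        proof -
          have "F s (r + t - s) = 0"
          proof -
            have "\<bar>F s (r+t-s)\<bar> \<le> K * H2 p q mu s \<bar>r+t-s\<bar>"
              using spec[OF spec[OF Fb, of s], of "r+t-s"] s r0 by simp
            moreover have "H2 p q mu s \<bar>r+t-s\<bar> = 0" unfolding H2_def using s False by auto
            ultimately show ?thesis by simp
          qed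
          moreover have "(r - t + s) * F s (r - t + s) = 0"
          proof (cases "r - t + s = 0")
            case False
            have "\<bar>F s (r-t+s)\<bar> \<le> K * H2 p q mu s \<bar>r-t+s\<bar>"
              using spec[OF spec[OF Fb, of s], of "r-t+s"] False by simp
            moreover have "H2 p q mu s \<bar>r-t+s\<bar> = 0" unfolding H2_def using s \<open>\<not> 1 \<le> t - r\<close> by auto
            ultimately show ?thesis by simp
          qed simp
          ultimately show ?thesis by simp
        qed
        have "integral {0..t} (\<lambda>s. (r + t - s) * F s (r + t - s) + (r - t + s) * F s (r - t + s))
            = integral {0..t} (\<lambda>_. 0::real)" by (rule integral_cong) (rule z)
        then have "Kplus F t r = 0" unfolding Kplus_def by simp
        then show ?thesis using C0 K by simp
      next
        case True
        define W where "W = omega1t p q mu t r / r"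
        have W0: "0 \<le> W" unfolding W_def omega1t_def using r0 by simp
        have KB: "\<bar>Kplus F t r\<bar> \<le> K * E2 p q mu t r / 2" by (rule Kplus_bound[OF pr K Fb r0 True])
        have WE: "W * E2 p q mu t r \<le> CA + CB"
        proof (cases "r < t/2")
          case True
          have Weq: "W = jb (t-r) powr k" unfolding W_def omega1t_def k_def using True r0 by simp
          have "W \<le> 2 powr k * (t-r) powr k" unfolding Weq using jb_pow_le \<open>1 \<le> t - r\<close> e0 by auto
          note Wle = this
          have S3: "t + r \<le> 3 * (t-r)" using True by simp
          have "W * E2 p q mu t r \<le> CA" unfolding CA_def E2_def e_def k_def c_def qb_def
            by (rule weightA) (use Wle S3 \<open>1 \<le> t - r\<close> W0 ex f c2 e1 e0 r0 in \<open>auto simp: e_def k_def c_def qb_def\<close>)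
          then show ?thesis using CB0 by simp
        next
          case False
          have Weq: "W = jb (t-r) powr e * jb (t+r) powr (q-1) / r"
            unfolding W_def omega1t_def e_def using False by simp
          have a1: "jb (t-r) powr e \<le> 2 powr e * (t-r) powr e" using jb_pow_le \<open>1 \<le> t - r\<close> e0 by auto
          have a2: "jb (t+r) powr (q-1) \<le> 2 powr (q-1) * (t+r) powr (q-1)" using jb_pow_le[of "t+r" "q-1"] \<open>1 \<le> t - r\<close> f r0 by auto
          have a3: "1/r \<le> 3/(t+r)" using False r0 t by (simp add: divide_simps)
          have "W \<le> (2 powr e * (t-r) powr e) * (2 powr (q-1) * (t+r) powr (q-1)) * (3/(t+r))"
          proof -
            have m1: "jb (t-r) powr e * jb (t+r) powr (q-1) \<le> (2 powr e * (t-r) powr e) * (2 powr (q-1) * (t+r) powr (q-1))"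
              by (rule mult_mono[OF a1 a2]) auto
            have "W = (jb (t-r) powr e * jb (t+r) powr (q-1)) * (1/r)" unfolding Weq by simp
            also have "\<dots> \<le> ((2 powr e * (t-r) powr e) * (2 powr (q-1) * (t+r) powr (q-1))) * (3/(t+r))"
              by (rule mult_mono[OF m1 a3]) (use r0 in auto)
            finally show ?thesis .
          qed
          also have "\<dots> = L * ((t-r) powr e * (t+r) powr (q-2))"
          proof -
            have tr: "0 < t + r" using r0 t by simp
            have "(t+r) powr (q-1) / (t+r) = (t+r) powr (q-2)"
            proof -
              have "(t+r) powr (q-1) = (t+r) powr (q-2) * (t+r) powr 1" by (simp only: powr_add[symmetric]) simp
              then show ?thesis using tr by simp
            qed
            moreover have "2 powr e * 2 powr (q-1) = 2 powr (e + q - 1)" by (simp add: powr_add[symmetric] add_diff_eq)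
            moreover have "(2 powr e * (t-r) powr e) * (2 powr (q-1) * (t+r) powr (q-1)) * (3/(t+r))
               = 3 * (2 powr e * 2 powr (q-1)) * ((t-r) powr e * ((t+r) powr (q-1) / (t+r)))"
              by (simp add: mult_ac)
            ultimately show ?thesis unfolding L_def by (simp add: mult_ac)
          qed
          finally have Wle: "W \<le> L * ((t-r) powr e * (t+r) powr (q-2))" .
          have "W * E2 p q mu t r \<le> CB" unfolding CB_def E2_def e_def c_def qb_def
            by (rule weightB[where k = k]) (use Wle \<open>1 \<le> t - r\<close> W0 ex f c2 e1 e0 r0 L0 in \<open>auto simp: e_def k_def c_def qb_def\<close>)
          then show ?thesis using CA0 by simp
        qed
        have "\<bar>omega1t p q mu t r / r * Kplus F t r\<bar> = W * \<bar>Kplus F t r\<bar>"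
          unfolding W_def[symmetric] using W0 by (simp add: abs_mult)
        also have "\<dots> \<le> W * (K * E2 p q mu t r / 2)" using KB W0 by (intro mult_left_mono) auto
        also have "\<dots> = K * (W * E2 p q mu t r) / 2" by simp
        also have "\<dots> \<le> K * (CA + CB) / 2" using WE K by (intro divide_right_mono mult_left_mono) auto
        also have "\<dots> \<le> C * K" unfolding C_def using K CA0 CB0 by (simp add: algebra_simps mult_nonneg_nonneg add_nonneg_nonneg)
        finally show ?thesis .
      qed
    qed
  qed
qed

definition G1 :: "real \<Rightarrow> real \<Rightarrow> real \<Rightarrow> real \<Rightarrow> real \<Rightarrow> real" where
  "G1 p q mu s \<rho> = (if 2 \<le> s \<and> \<rho> \<le> s - 1 then omega1t p q mu s \<rho> powr (-p) else 0)"

lemma half_pow: "0 < (s::real) \<Longrightarrow> (s/2) powr (-a) = 2 powr a * s powr (-a)"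
  by (simp add: powr_divide powr_minus divide_simps)

lemma pt1:
  assumes pr: "prm p q mu" and s: "2 \<le> s" and \<rho>: "0 < \<rho>" "\<rho> \<le> s - 1"
  shows "\<rho> * omega1t p q mu s \<rho> powr (-p) \<le>
    2 powr (mu+p*q-2*p) * s powr (-(mu+p*q-2*p)) * \<rho> powr (1-p) + s powr (1 - p*(q-1)) * (s-\<rho>) powr (-mu)"
  (is "?L \<le> ?A + ?B")
proof -
  note f = prm_facts[OF pr]
  have a0: "0 < mu+p*q-2*p" using f by linarith
  have A0: "0 \<le> ?A" "0 \<le> ?B" by auto
  show ?thesis
  proof (cases "\<rho> < s/2")
    case True
    have "omega1t p q mu s \<rho> powr (-p) = \<rho> powr (-p) * jb (s-\<rho>) powr (-(mu + p*q - 2*p))"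
      using om1t_I[of p \<rho> s q mu] f True \<rho> by simp
    also have "\<dots> \<le> \<rho> powr (-p) * (s/2) powr (-(mu + p*q - 2*p))"
    proof -
      have "jb (s-\<rho>) powr (-(mu + p*q - 2*p)) \<le> (s-\<rho>) powr (-(mu + p*q - 2*p))"
        using True \<rho> a0 by (intro jbn) auto
      also have "\<dots> \<le> (s/2) powr (-(mu + p*q - 2*p))"
        using True s a0 by (intro powr_mono2') auto
      finally show ?thesis by (intro mult_left_mono) auto
    qed
    finally have "?L \<le> \<rho> * (\<rho> powr (-p) * (s/2) powr (-(mu + p*q - 2*p)))"
      using \<rho> by (intro mult_left_mono) auto
    also have "\<dots> = ?A" using \<rho> s half_pow[of s "mu + p*q - 2*p"] mulpow[OF \<rho>(1), of "-p"]
      by (simp add: mult_ac)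
    finally show ?thesis using A0 by linarith
  next
    case False
    have "omega1t p q mu s \<rho> powr (-p) = jb (s-\<rho>) powr (-mu) * jb (s+\<rho>) powr (-(p*(q-1)))"
      using om1t_II[of p s \<rho> q mu] f False by simp
    also have "\<dots> \<le> (s-\<rho>) powr (-mu) * s powr (-(p*(q-1)))"
    proof (rule mult_mono)
      show "jb (s-\<rho>) powr (-mu) \<le> (s-\<rho>) powr (-mu)" using \<rho> f by (intro jbn) auto
      have "jb (s+\<rho>) powr (-(p*(q-1))) \<le> (s+\<rho>) powr (-(p*(q-1)))" using \<rho> s f by (intro jbn) auto
      also have "\<dots> \<le> s powr (-(p*(q-1)))" using \<rho> s f by (intro powr_mono2') auto
      finally show "jb (s+\<rho>) powr (-(p*(q-1))) \<le> s powr (-(p*(q-1)))" .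
    qed auto
    finally have "?L \<le> \<rho> * ((s-\<rho>) powr (-mu) * s powr (-(p*(q-1))))"
      using \<rho> by (intro mult_left_mono) auto
    also have "\<dots> \<le> s * ((s-\<rho>) powr (-mu) * s powr (-(p*(q-1))))"
      using \<rho> by (intro mult_right_mono) auto
    also have "\<dots> = ?B" using mulpow[of s "-(p*(q-1))"] s by (simp add: mult_ac)
    finally show ?thesis using A0 by linarith
  qed
qed

lemma int_ineq1:
  assumes "0 < a" "a \<le> b" "2 < (p::real)"
  shows "(a powr (2-p) - b powr (2-p)) / (p-2) \<le> (b - a) * a powr (1-p)"
proof -
  have h: "((\<lambda>x. (1*x+0) powr (1-p)) has_integral ((1*b+0) powr (1-p+1) - (1*a+0) powr (1-p+1)) / (1*(1-p+1))) {a..b}"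
    by (rule pow_has_int) (use assms in auto)
  have h2: "((\<lambda>x. a powr (1-p)) has_integral a powr (1-p) * (b - a)) {a..b}"
    using has_integral_const_real[of "a powr (1-p)" a b] assms by (simp add: mult.commute)
  have "((1*b+0) powr (1-p+1) - (1*a+0) powr (1-p+1)) / (1*(1-p+1)) \<le> a powr (1-p) * (b - a)"
    by (rule has_integral_le[OF h h2]) (use assms in \<open>auto intro!: powr_mono2'\<close>)
  moreover have "((1*b+0) powr (1-p+1) - (1*a+0) powr (1-p+1)) / (1*(1-p+1)) = (a powr (2-p) - b powr (2-p)) / (p-2)"
    using assms by (simp add: field_simps)
  ultimately show ?thesis by (simp add: mult_ac)
qed

lemma int_ineq2:
  assumes "a \<le> b" "0 < s - b" "0 < (mu::real)" "mu < 1"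
  shows "((s-a) powr (1-mu) - (s-b) powr (1-mu)) / (1-mu) \<le> (b - a) * (s-b) powr (-mu)"
proof -
  have h: "((\<lambda>x. ((-1)*x+s) powr (-mu)) has_integral (((-1)*b+s) powr (-mu+1) - ((-1)*a+s) powr (-mu+1)) / ((-1)*(-mu+1))) {a..b}"
    by (rule pow_has_int) (use assms in auto)
  have h2: "((\<lambda>x. (s-b) powr (-mu)) has_integral (s-b) powr (-mu) * (b - a)) {a..b}"
    using has_integral_const_real[of "(s-b) powr (-mu)" a b] assms by (simp add: mult.commute)
  have "(((-1)*b+s) powr (-mu+1) - ((-1)*a+s) powr (-mu+1)) / ((-1)*(-mu+1)) \<le> (s-b) powr (-mu) * (b - a)"
    by (rule has_integral_le[OF h h2]) (use assms in \<open>auto intro!: powr_mono2'\<close>)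
  moreover have "(((-1)*b+s) powr (-mu+1) - ((-1)*a+s) powr (-mu+1)) / ((-1)*(-mu+1)) = ((s-a) powr (1-mu) - (s-b) powr (1-mu)) / (1-mu)"
    using assms by (simp add: field_simps)
  ultimately show ?thesis by (simp add: mult_ac)
qed

lemma inner_red:
  fixes f :: "real \<Rightarrow> real"
  assumes cont: "continuous_on UNIV f" and odd: "\<And>x. f (-x) = - f x"
    and supp: "\<And>x. x > c \<Longrightarrow> f x = 0"
    and ab: "lo \<le> hi" "\<bar>lo\<bar> \<le> hi"
  shows "integral {lo..hi} f = (if \<bar>lo\<bar> \<le> c then integral {\<bar>lo\<bar>..min hi c} f else 0)"
proof -
  have intg: "f integrable_on {x..y}" for x y
    using cont by (intro integrable_continuous_real) (auto intro: continuous_on_subset)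
  have step1: "integral {lo..hi} f = integral {\<bar>lo\<bar>..hi} f"
  proof (cases "0 \<le> lo")
    case True
    then show ?thesis by simp
  next
    case False
    have "integral {lo..-lo} f + integral {-lo..hi} f = integral {lo..hi} f"
      by (rule Henstock_Kurzweil_Integration.integral_combine) (use False ab intg in auto)
    moreover have "integral {lo..-lo} f = 0"
      using odd_int_zero[of "-lo" f] False cont odd by (auto intro: continuous_on_subset)
    ultimately show ?thesis using False by simp
  qed
  show ?thesis
  proof (cases "\<bar>lo\<bar> \<le> c")
    case False
    have "integral {\<bar>lo\<bar>..hi} f = integral {\<bar>lo\<bar>..hi} (\<lambda>_. 0)"
      by (rule integral_cong) (use False supp in auto)
    then show ?thesis using step1 False by simp
  next
    case True
    define m where "m = min hi c"
    have m: "\<bar>lo\<bar> \<le> m" "m \<le> hi" using True ab unfolding m_def by auto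
    have "integral {\<bar>lo\<bar>..m} f + integral {m..hi} f = integral {\<bar>lo\<bar>..hi} f"
      by (rule Henstock_Kurzweil_Integration.integral_combine) (use m intg in auto)
    moreover have "integral {m..hi} f = integral {m..hi} (\<lambda>_. 0)"
    proof (rule integral_spike[of "{m}"])
      fix x assume x: "x \<in> {m..hi} - {m}"
      show "0 = f x"
      proof (cases "hi \<le> c")
        case True
        then show ?thesis using x unfolding m_def by auto
      next
        case False
        then show ?thesis using x supp unfolding m_def by auto
      qed
    qed auto
    ultimately show ?thesis using step1 True unfolding m_def by simp
  qed
qed

definition Psi :: "real \<Rightarrow> real \<Rightarrow> real \<Rightarrow> real \<Rightarrow> real \<Rightarrow> real \<Rightarrow> real" where
  "Psi p q mu t r s = (if \<bar>s-(t-r)\<bar> \<le> s - 1 then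
      2 powr (mu+p*q-2*p) * s powr (-(mu+p*q-2*p)) *
        ((\<bar>s-(t-r)\<bar> powr (2-p) - (min (t+r-s) (s-1)) powr (2-p)) / (p-2))
    + s powr (1 - p*(q-1)) *
        (((s - \<bar>s-(t-r)\<bar>) powr (1-mu) - (s - min (t+r-s) (s-1)) powr (1-mu)) / (1-mu))
    else 0)"

lemma inner_bound:
  assumes pr: "prm p q mu" and K: "0 \<le> K"
    and Fb: "\<forall>s \<rho>. \<rho> \<noteq> 0 \<longrightarrow> \<bar>F s \<rho>\<bar> \<le> K * G1 p q mu s \<bar>\<rho>\<bar>"
    and Fc: "continuous_on UNIV (F s)" and Fe: "\<And>\<rho>. F s (-\<rho>) = F s \<rho>"
    and s2: "2 \<le> s" and st: "s \<le> t" and r: "0 \<le> r" and sT: "s \<noteq> t - r"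
  shows "\<bar>integral {r-t+s..r+t-s} (\<lambda>\<rho>. \<rho> * F s \<rho>)\<bar> \<le> K * Psi p q mu t r s"
proof -
  note f = prm_facts[OF pr]
  define \<alpha> where "\<alpha> = \<bar>s-(t-r)\<bar>"
  define \<beta> where "\<beta> = min (t+r-s) (s-1)"
  define a where "a = mu+p*q-2*p"
  have a0: "0 < a" using f unfolding a_def by linarith
  have \<alpha>0: "0 < \<alpha>" using sT unfolding \<alpha>_def by auto
  have cf: "continuous_on UNIV (\<lambda>\<rho>. \<rho> * F s \<rho>)" using Fc by (intro continuous_intros) auto
  have supp: "\<rho> * F s \<rho> = 0" if "\<rho> > s - 1" for \<rho>
  proof -
    have "\<bar>F s \<rho>\<bar> \<le> K * G1 p q mu s \<bar>\<rho>\<bar>" using spec[OF spec[OF Fb, of s], of \<rho>] that s2 by simp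
    moreover have "G1 p q mu s \<bar>\<rho>\<bar> = 0" unfolding G1_def using that s2 by auto
    ultimately show ?thesis by simp
  qed
  have red: "integral {r-t+s..r+t-s} (\<lambda>\<rho>. \<rho> * F s \<rho>) =
     (if \<bar>r-t+s\<bar> \<le> s - 1 then integral {\<bar>r-t+s\<bar>..min (r+t-s) (s-1)} (\<lambda>\<rho>. \<rho> * F s \<rho>) else 0)"
    by (rule inner_red[OF cf _ supp]) (use Fe st r in \<open>auto simp: abs_le_iff\<close>)
  have e1: "\<bar>r-t+s\<bar> = \<alpha>" "r+t-s = t+r-s" unfolding \<alpha>_def by auto
  show ?thesis
  proof (cases "\<alpha> \<le> s - 1")
    case False
    then show ?thesis using red e1(1) K unfolding Psi_def \<alpha>_def by simp
  next
    case True
    have ab: "\<alpha> \<le> \<beta>" using True st r unfolding \<beta>_def \<alpha>_def by auto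
    have sb: "1 \<le> s - \<beta>" unfolding \<beta>_def by auto
    have H1: "((\<lambda>x. (1*x+0) powr (1-p)) has_integral ((1*\<beta>+0) powr (1-p+1) - (1*\<alpha>+0) powr (1-p+1)) / (1*(1-p+1))) {\<alpha>..\<beta>}"
      by (rule pow_has_int) (use ab \<alpha>0 f in auto)
    have H1': "((\<lambda>x. x powr (1-p)) has_integral (\<alpha> powr (2-p) - \<beta> powr (2-p)) / (p-2)) {\<alpha>..\<beta>}"
    proof -
      have "((1*\<beta>+0) powr (1-p+1) - (1*\<alpha>+0) powr (1-p+1)) / (1*(1-p+1)) = (\<alpha> powr (2-p) - \<beta> powr (2-p)) / (p-2)"
        using f by (simp add: field_simps)
      then show ?thesis using H1 by simp
    qed
    have H2: "((\<lambda>x. ((-1)*x+s) powr (-mu)) has_integral (((-1)*\<beta>+s) powr (-mu+1) - ((-1)*\<alpha>+s) powr (-mu+1)) / ((-1)*(-mu+1))) {\<alpha>..\<beta>}"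
      by (rule pow_has_int) (use ab sb f in auto)
    have H2': "((\<lambda>x. (s-x) powr (-mu)) has_integral ((s-\<alpha>) powr (1-mu) - (s-\<beta>) powr (1-mu)) / (1-mu)) {\<alpha>..\<beta>}"
    proof -
      have "(((-1)*\<beta>+s) powr (-mu+1) - ((-1)*\<alpha>+s) powr (-mu+1)) / ((-1)*(-mu+1)) = ((s-\<alpha>) powr (1-mu) - (s-\<beta>) powr (1-mu)) / (1-mu)"
        using f by (simp add: field_simps)
      then show ?thesis using H2 by simp
    qed
    define B where "B = 2 powr a * s powr (-a) * ((\<alpha> powr (2-p) - \<beta> powr (2-p)) / (p-2))
      + s powr (1 - p*(q-1)) * (((s-\<alpha>) powr (1-mu) - (s-\<beta>) powr (1-mu)) / (1-mu))"
    have HB: "((\<lambda>x. K * (2 powr a * s powr (-a) * x powr (1-p) + s powr (1 - p*(q-1)) * (s-x) powr (-mu))) has_integral K * B) {\<alpha>..\<beta>}"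
      unfolding B_def
      by (intro has_integral_mult_right has_integral_add H1' H2')
    have pt: "\<bar>x * F s x\<bar> \<le> K * (2 powr a * s powr (-a) * x powr (1-p) + s powr (1 - p*(q-1)) * (s-x) powr (-mu))"
      if x: "x \<in> {\<alpha>..\<beta>} - {}" for x
    proof -
      have x0: "0 < x" "x \<le> s - 1" using x \<alpha>0 unfolding \<beta>_def by auto
      have "\<bar>F s x\<bar> \<le> K * G1 p q mu s x" using spec[OF spec[OF Fb, of s], of x] x0 by simp
      also have "\<dots> = K * omega1t p q mu s x powr (-p)" unfolding G1_def using s2 x0 by simp
      finally have "x * \<bar>F s x\<bar> \<le> x * (K * omega1t p q mu s x powr (-p))" using x0 by (intro mult_left_mono) auto
      also have "\<dots> = K * (x * omega1t p q mu s x powr (-p))" by simp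
      also have "\<dots> \<le> K * (2 powr a * s powr (-a) * x powr (1-p) + s powr (1 - p*(q-1)) * (s-x) powr (-mu))"
        using pt1[OF pr s2 x0] K unfolding a_def by (intro mult_left_mono) auto
      finally show ?thesis using x0 by (simp add: abs_mult)
    qed
    have B0: "0 \<le> K * B"
      by (rule has_integral_nonneg[OF HB]) (use K sb in \<open>auto intro!: mult_nonneg_nonneg add_nonneg_nonneg\<close>)
    have "\<bar>integral {\<alpha>..\<beta>} (\<lambda>\<rho>. \<rho> * F s \<rho>)\<bar> \<le> K * B"
      by (rule int_bound[OF HB _ pt B0, of "{}"]) simp
    moreover have "integral {r-t+s..r+t-s} (\<lambda>\<rho>. \<rho> * F s \<rho>) = integral {\<alpha>..\<beta>} (\<lambda>\<rho>. \<rho> * F s \<rho>)"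
    proof -
      have e2: "min (r+t-s) (s-1) = \<beta>" unfolding \<beta>_def by (simp add: add.commute)
      show ?thesis using red True unfolding e1(1) e2 by simp
    qed
    moreover have "Psi p q mu t r s = B" unfolding Psi_def B_def using True unfolding \<alpha>_def \<beta>_def a_def by simp
    ultimately show ?thesis by simp
  qed
qed

lemma ab_facts:
  fixes s t r :: real
  assumes r: "0 \<le> r" and st: "s \<le> t" and h: "\<bar>s-(t-r)\<bar> \<le> s - 1"
  shows "\<bar>s-(t-r)\<bar> \<le> min (t+r-s) (s-1)"
    "min (t+r-s) (s-1) - \<bar>s-(t-r)\<bar> \<le> 2*r"
    "1 \<le> s - min (t+r-s) (s-1)"
    "s - \<bar>s-(t-r)\<bar> \<le> 2* s - (t-r)"
    "s - \<bar>s-(t-r)\<bar> \<le> t - r"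
    "((t-r)+1)/2 \<le> s"
    "2* s - (t+r) \<le> s - min (t+r-s) (s-1)"
    "1 \<le> s - \<bar>s-(t-r)\<bar>"
  using assms by (cases "s < t - r"; auto simp: abs_if min_def; linarith)+

definition psiA :: "real \<Rightarrow> real \<Rightarrow> real \<Rightarrow> real \<Rightarrow> real \<Rightarrow> real \<Rightarrow> real" where
  "psiA p q mu t r s =
    4 powr (mu+p*q-2*p) * (t-r) powr (-(mu+p*q-2*p)) *
      ((if 0 \<le> s \<and> s \<le> t-r-r then 2*r*((t-r)-s) powr (1-p) else 0)
     + (if t-r-r \<le> s \<and> s \<le> t then (1/(p-2)) * \<bar>s-(t-r)\<bar> powr (2-p) else 0))
  + 2 powr (p*(q-1)-1) * (t-r) powr (1-p*(q-1)) *
      ((if (t-r)/2 \<le> s \<and> s \<le> (t+r)/2 then (2*r) powr (1-mu)/(1-mu) else 0)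
     + (if (t+r)/2 \<le> s \<and> s \<le> t then 2*r*(2* s-(t+r)) powr (-mu) else 0))"

lemma psiA_nn: "prm p q mu \<Longrightarrow> 0 \<le> r \<Longrightarrow> 0 \<le> psiA p q mu t r s"
  unfolding psiA_def using prm_facts[of p q mu]
  by (intro add_nonneg_nonneg mult_nonneg_nonneg) auto

lemma PsiA:
  assumes pr: "prm p q mu" and r: "0 < r" and T: "1 \<le> t - r" and rT: "r < t - r"
    and s: "0 \<le> s" "s \<le> t" and sT: "s \<noteq> t - r"
  shows "Psi p q mu t r s \<le> psiA p q mu t r s"
proof (cases "\<bar>s-(t-r)\<bar> \<le> s - 1")
  case False
  then show ?thesis using psiA_nn[OF pr, of r t s] r unfolding Psi_def by simp
next
  case True
  note f = prm_facts[OF pr]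
  note ab = ab_facts[OF less_imp_le[OF r] s(2) True] r
  define T where "T = t - r"
  define S where "S = t + r"
  define \<alpha> where "\<alpha> = \<bar>s-(t-r)\<bar>"
  define \<beta> where "\<beta> = min (t+r-s) (s-1)"
  define a where "a = mu+p*q-2*p"
  define bt where "bt = p*(q-1)"
  have a0: "0 < a" using f unfolding a_def by linarith
  have bt2: "2 < bt" using f unfolding bt_def by (simp add: algebra_simps)
  have \<alpha>0: "0 < \<alpha>" using sT unfolding \<alpha>_def by auto
  have sT2: "T/2 \<le> s" "0 < T" using ab T unfolding T_def by auto
  have s0: "0 < s" using sT2 by simp
  define X1 where "X1 = (\<alpha> powr (2-p) - \<beta> powr (2-p)) / (p-2)"
  define X2 where "X2 = ((s - \<alpha>) powr (1-mu) - (s - \<beta>) powr (1-mu)) / (1-mu)"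
  have PsiE: "Psi p q mu t r s = 2 powr a * s powr (-a) * X1 + s powr (1 - bt) * X2"
    unfolding Psi_def X1_def X2_def \<alpha>_def \<beta>_def a_def bt_def using True by simp
  have X1nn: "0 \<le> X1"
  proof -
    have "\<beta> powr (2-p) \<le> \<alpha> powr (2-p)" using ab \<alpha>0 f unfolding \<alpha>_def \<beta>_def by (intro powr_mono2') auto
    then show ?thesis unfolding X1_def using f by simp
  qed
  have X2nn: "0 \<le> X2"
  proof -
    have "(s - \<beta>) powr (1-mu) \<le> (s - \<alpha>) powr (1-mu)" using ab f unfolding \<alpha>_def \<beta>_def by (intro powr_mono2) auto
    then show ?thesis unfolding X2_def using f by simp
  qed
  define w1 where "w1 = (if 0 \<le> s \<and> s \<le> t-r-r then 2*r*((t-r)-s) powr (1-p) else 0)"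
  define w2 where "w2 = (if t-r-r \<le> s \<and> s \<le> t then (1/(p-2)) * \<bar>s-(t-r)\<bar> powr (2-p) else 0)"
  define w3 where "w3 = (if (t-r)/2 \<le> s \<and> s \<le> (t+r)/2 then (2*r) powr (1-mu)/(1-mu) else 0)"
  define w4 where "w4 = (if (t+r)/2 \<le> s \<and> s \<le> t then 2*r*(2* s-(t+r)) powr (-mu) else 0)"
  have wnn: "0 \<le> w1" "0 \<le> w2" "0 \<le> w3" "0 \<le> w4" unfolding w1_def w2_def w3_def w4_def using f r by auto
  have X1le: "X1 \<le> w1 + w2"
  proof (cases "s \<le> t-r-r")
    case True
    have "X1 \<le> (\<beta> - \<alpha>) * \<alpha> powr (1-p)" unfolding X1_def
      by (rule int_ineq1) (use \<alpha>0 ab f in \<open>auto simp: \<alpha>_def \<beta>_def\<close>)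
    also have "\<dots> \<le> 2*r * \<alpha> powr (1-p)" using ab unfolding \<alpha>_def \<beta>_def by (intro mult_right_mono) auto
    also have "\<alpha> = (t-r) - s" using True r unfolding \<alpha>_def by auto
    finally have "X1 \<le> w1" unfolding w1_def using True s by simp
    then show ?thesis using wnn by linarith
  next
    case False
    have "X1 \<le> \<alpha> powr (2-p) / (p-2)" unfolding X1_def using f by (intro divide_right_mono) auto
    then have "X1 \<le> w2" unfolding w2_def \<alpha>_def using False s by simp
    then show ?thesis using wnn by linarith
  qed
  have X2le: "X2 \<le> w3 + w4"
  proof (cases "s \<le> (t+r)/2")
    case True
    have "X2 \<le> (s - \<alpha>) powr (1-mu) / (1-mu)" unfolding X2_def using f by (intro divide_right_mono) auto
    also have "\<dots> \<le> (2*r) powr (1-mu) / (1-mu)"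
    proof -
      have "2 * s \<le> t + r" using True by simp
      then have "s - \<alpha> \<le> 2*r" using ab unfolding \<alpha>_def by linarith
      then have "(s - \<alpha>) powr (1-mu) \<le> (2*r) powr (1-mu)" using ab f unfolding \<alpha>_def by (intro powr_mono2) auto
      then show ?thesis using f by (intro divide_right_mono) auto
    qed
    finally have "X2 \<le> w3" unfolding w3_def using True sT2 unfolding T_def by simp
    then show ?thesis using wnn by linarith
  next
    case False
    have "X2 \<le> (\<beta> - \<alpha>) * (s - \<beta>) powr (-mu)" unfolding X2_def
      by (rule int_ineq2) (use ab f in \<open>auto simp: \<alpha>_def \<beta>_def\<close>)
    also have "\<dots> \<le> 2*r * (2* s-(t+r)) powr (-mu)"
    proof (rule mult_mono)
      show "\<beta> - \<alpha> \<le> 2*r" using ab unfolding \<alpha>_def \<beta>_def by simp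
      show "(s - \<beta>) powr (-mu) \<le> (2* s-(t+r)) powr (-mu)"
        using ab False f unfolding \<beta>_def by (intro powr_mono2') auto
    qed (use r in auto)
    finally have "X2 \<le> w4" unfolding w4_def using False s by simp
    then show ?thesis using wnn by linarith
  qed
  have c1: "2 powr a * s powr (-a) \<le> 4 powr a * (t-r) powr (-a)"
  proof -
    have "s powr (-a) \<le> (T/2) powr (-a)" using sT2 a0 by (intro powr_mono2') auto
    also have "\<dots> = 2 powr a * T powr (-a)" using half_pow[of T a] sT2 by simp
    finally have "2 powr a * s powr (-a) \<le> 2 powr a * (2 powr a * T powr (-a))" by (intro mult_left_mono) auto
    also have "\<dots> = (2 powr a * 2 powr a) * T powr (-a)" by simp
    also have "2 powr a * 2 powr a = 4 powr a" by (simp add: powr_mult[symmetric])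
    finally show ?thesis unfolding T_def .
  qed
  have c2: "s powr (1 - bt) \<le> 2 powr (bt - 1) * (t-r) powr (1 - bt)"
  proof -
    have "s powr (-(bt-1)) \<le> (T/2) powr (-(bt-1))" using sT2 bt2 by (intro powr_mono2') auto
    also have "\<dots> = 2 powr (bt-1) * T powr (-(bt-1))" using half_pow[of T "bt-1"] sT2 by simp
    finally show ?thesis unfolding T_def by simp
  qed
  have "Psi p q mu t r s \<le> (4 powr a * (t-r) powr (-a)) * (w1 + w2) + (2 powr (bt - 1) * (t-r) powr (1 - bt)) * (w3 + w4)"
    unfolding PsiE
  proof (rule add_mono)
    show "2 powr a * s powr (-a) * X1 \<le> 4 powr a * (t-r) powr (-a) * (w1 + w2)"
      by (rule mult_mono[OF c1 X1le]) (use X1nn in auto)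
    show "s powr (1 - bt) * X2 \<le> 2 powr (bt - 1) * (t-r) powr (1 - bt) * (w3 + w4)"
      by (rule mult_mono[OF c2 X2le]) (use X2nn in auto)
  qed
  also have "\<dots> = psiA p q mu t r s" unfolding psiA_def w1_def w2_def w3_def w4_def a_def bt_def by simp
  finally show ?thesis .
qed

definition EA :: "real \<Rightarrow> real \<Rightarrow> real \<Rightarrow> real \<Rightarrow> real \<Rightarrow> real" where
  "EA p q mu t r =
    4 powr (mu+p*q-2*p) * (t-r) powr (-(mu+p*q-2*p)) *
      (2 * r powr (3-p) / (p-2) + 2 * r powr (3-p) / ((3-p)*(p-2)))
  + 2 powr (p*(q-1)-1) * (t-r) powr (1-p*(q-1)) *
      (2 powr (1-mu) * r powr (2-mu) / (1-mu) + r * (t-r) powr (1-mu) / (1-mu))"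

lemma intA:
  assumes pr: "prm p q mu" and r: "0 < r" and T: "1 \<le> t - r" and rT: "r < t - r"
  shows "\<exists>V. ((\<lambda>s. psiA p q mu t r s) has_integral V) {0..t} \<and> V \<le> EA p q mu t r"
proof -
  note f = prm_facts[OF pr]
  define T where "T = t - r"
  define S where "S = t + r"
  define A where "A = 4 powr (mu+p*q-2*p) * (t-r) powr (-(mu+p*q-2*p))"
  define B where "B = 2 powr (p*(q-1)-1) * (t-r) powr (1-p*(q-1))"
  have A0: "0 \<le> A" "0 \<le> B" unfolding A_def B_def by auto
  have TT: "0 < T" "r < T" "T \<le> t" unfolding T_def using T rT r by auto
  have i1a: "((\<lambda>s. ((-1)* s + T) powr (1-p)) has_integral
      (((-1)*(t-r-r) + T) powr (1-p+1) - ((-1)*0 + T) powr (1-p+1)) / ((-1)*(1-p+1))) {0..t-r-r}"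
    by (rule pow_has_int) (use TT f r in \<open>auto simp: T_def\<close>)
  have e1: "(((-1)*(t-r-r) + T) powr (1-p+1) - ((-1)*0 + T) powr (1-p+1)) / ((-1)*(1-p+1))
      = (r powr (2-p) - T powr (2-p)) / (p-2)" using f by (simp add: T_def field_simps)
  have i1: "((\<lambda>s. if 0 \<le> s \<and> s \<le> t-r-r then 2*r*((t-r)-s) powr (1-p) else 0) has_integral
      2*r*((r powr (2-p) - T powr (2-p)) / (p-2))) {0..t}"
  proof -
    have "((\<lambda>s. 2*r*((t-r)-s) powr (1-p)) has_integral 2*r*((r powr (2-p) - T powr (2-p)) / (p-2))) {0..t-r-r}"
      using has_integral_mult_right[OF i1a, of "2*r"] unfolding e1 by (simp add: T_def)
    note W = this
    show ?thesis by (rule has_int_window[OF _ _ _ W]) (use TT in \<open>auto simp: T_def\<close>)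
  qed
  have i2a: "((\<lambda>s. \<bar>s - T\<bar> powr (2-p)) has_integral ((T-(t-r-r)) powr (2-p+1) + (t-T) powr (2-p+1))/(2-p+1)) {t-r-r..t}"
    by (rule abs_pow_has_int) (use TT f in \<open>auto simp: T_def\<close>)
  have i2: "((\<lambda>s. if t-r-r \<le> s \<and> s \<le> t then (1/(p-2)) * \<bar>s-(t-r)\<bar> powr (2-p) else 0) has_integral
      (1/(p-2)) * ((r powr (3-p) + r powr (3-p))/(3-p))) {0..t}"
  proof -
    have e2: "((T-(t-r-r)) powr (2-p+1) + (t-T) powr (2-p+1))/(2-p+1) = (r powr (3-p) + r powr (3-p))/(3-p)"
      by (simp add: T_def)
    have "((\<lambda>s. (1/(p-2)) * \<bar>s-(t-r)\<bar> powr (2-p)) has_integral (1/(p-2)) * ((r powr (3-p) + r powr (3-p))/(3-p))) {t-r-r..t}"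
      using has_integral_mult_right[OF i2a, of "1/(p-2)"] unfolding e2 by (simp add: T_def)
    note W = this
    show ?thesis by (rule has_int_window[OF _ _ _ W]) (use TT in \<open>auto simp: T_def\<close>)
  qed
  have i3: "((\<lambda>s. if (t-r)/2 \<le> s \<and> s \<le> (t+r)/2 then (2*r) powr (1-mu)/(1-mu) else 0) has_integral
      (2*r) powr (1-mu)/(1-mu) * r) {0..t}"
  proof -
    have "((\<lambda>s. (2*r) powr (1-mu)/(1-mu)) has_integral (2*r) powr (1-mu)/(1-mu) * r) {(t-r)/2..(t+r)/2}"
      using has_integral_const_real[of "(2*r) powr (1-mu)/(1-mu)" "(t-r)/2" "(t+r)/2"] r by (simp add: field_simps)
    note W = this
    show ?thesis by (rule has_int_window[OF _ _ _ W]) (use TT r in \<open>auto simp: T_def\<close>)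
  qed
  have i4a: "((\<lambda>s. (2* s + (-S)) powr (-mu)) has_integral
      ((2*t + (-S)) powr (-mu+1) - (2*(S/2) + (-S)) powr (-mu+1)) / (2*(-mu+1))) {S/2..t}"
    by (rule pow_has_int) (use TT f r in \<open>auto simp: T_def S_def\<close>)
  have i4: "((\<lambda>s. if (t+r)/2 \<le> s \<and> s \<le> t then 2*r*(2* s-(t+r)) powr (-mu) else 0) has_integral
      2*r*(T powr (1-mu) / (2*(1-mu)))) {0..t}"
  proof -
    have e4: "((2*t + (-S)) powr (-mu+1) - (2*(S/2) + (-S)) powr (-mu+1)) / (2*(-mu+1)) = T powr (1-mu) / (2*(1-mu))"
    proof -
      have h: "2*t + (-S) = T" "2*(S/2) + (-S) = 0" by (simp_all add: S_def T_def field_simps)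
      show ?thesis unfolding h by simp
    qed
    have "((\<lambda>s. 2*r*(2* s-(t+r)) powr (-mu)) has_integral 2*r*(T powr (1-mu) / (2*(1-mu)))) {(t+r)/2..t}"
      using has_integral_mult_right[OF i4a, of "2*r"] unfolding e4 by (simp add: S_def algebra_simps)
    note W = this
    show ?thesis by (rule has_int_window[OF _ _ _ W]) (use TT r in \<open>auto simp: T_def\<close>)
  qed
  have all: "((\<lambda>s. psiA p q mu t r s) has_integral
     A * (2*r*((r powr (2-p) - T powr (2-p)) / (p-2)) + (1/(p-2)) * ((r powr (3-p) + r powr (3-p))/(3-p)))
   + B * ((2*r) powr (1-mu)/(1-mu) * r + 2*r*(T powr (1-mu) / (2*(1-mu))))) {0..t}"
    unfolding psiA_def A_def[symmetric] B_def[symmetric]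
    by (intro has_integral_add has_integral_mult_right i1 i2 i3 i4)
  have le: "A * (2*r*((r powr (2-p) - T powr (2-p)) / (p-2)) + (1/(p-2)) * ((r powr (3-p) + r powr (3-p))/(3-p)))
   + B * ((2*r) powr (1-mu)/(1-mu) * r + 2*r*(T powr (1-mu) / (2*(1-mu)))) \<le> EA p q mu t r"
  proof -
    have m1: "r * r powr (2-p) = r powr (3-p)" using mulpow[OF r, of "2-p"] by simp
    have m2: "(2*r) powr (1-mu) * r = 2 powr (1-mu) * r powr (2-mu)"
      using mulpow[OF r, of "1-mu"] r by (simp add: powr_mult mult_ac)
    have L1: "2*r*((r powr (2-p) - T powr (2-p)) / (p-2)) \<le> 2 * r powr (3-p) / (p-2)"
    proof -
      have "2*r*((r powr (2-p) - T powr (2-p)) / (p-2)) \<le> 2*r*(r powr (2-p) / (p-2))"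
        using f r by (intro mult_left_mono divide_right_mono) auto
      moreover have "2*r*(r powr (2-p) / (p-2)) = 2 * r powr (3-p) / (p-2)" unfolding m1[symmetric] by simp
      ultimately show ?thesis by (rule ord_le_eq_trans)
    qed
    have L2: "(1/(p-2)) * ((r powr (3-p) + r powr (3-p))/(3-p)) = 2 * r powr (3-p) / ((3-p)*(p-2))"
      by (simp add: field_simps)
    have L3: "(2*r) powr (1-mu)/(1-mu) * r + 2*r*(T powr (1-mu) / (2*(1-mu)))
        = 2 powr (1-mu) * r powr (2-mu) / (1-mu) + r * (t-r) powr (1-mu) / (1-mu)"
    proof -
      have mu1: "1 - mu \<noteq> 0" using f by simp
      have "2*r*(T powr (1-mu) / (2*(1-mu))) = r * (t-r) powr (1-mu) / (1-mu)" using mu1 by (simp add: T_def field_simps)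
      moreover have "(2*r) powr (1-mu)/(1-mu) * r = 2 powr (1-mu) * r powr (2-mu) / (1-mu)" using m2 by simp
      ultimately show ?thesis by simp
    qed
    have s1: "2*r*((r powr (2-p) - T powr (2-p)) / (p-2)) + (1/(p-2)) * ((r powr (3-p) + r powr (3-p))/(3-p))
       \<le> 2 * r powr (3-p) / (p-2) + 2 * r powr (3-p) / ((3-p)*(p-2))" using L1 L2 by linarith
    show ?thesis unfolding EA_def A_def[symmetric] B_def[symmetric] L3
      using mult_left_mono[OF s1 A0(1)] by simp
  qed
  show ?thesis using all le by blast
qed

definition psiB :: "real \<Rightarrow> real \<Rightarrow> real \<Rightarrow> real \<Rightarrow> real \<Rightarrow> real \<Rightarrow> real" where
  "psiB p q mu t r s =
    4 powr (mu+p*q-2*p) * (t-r) powr (-(mu+p*q-2*p)) *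
      (if 0 \<le> s \<and> s \<le> min (2*(t-r)) t then (1/(p-2)) * \<bar>s-(t-r)\<bar> powr (2-p) else 0)
  + (2 powr (mu+p*q-2*p) * 2 powr (p-2) / (p-2)) *
      (if min (2*(t-r)) t \<le> s \<and> s \<le> t then s powr (2-p-(mu+p*q-2*p)) else 0)
  + ((t-r) powr (1-mu) / (1-mu)) *
      (if (t-r)/2 \<le> s \<and> s \<le> t then s powr (1-p*(q-1)) else 0)"

lemma psiB_nn: "prm p q mu \<Longrightarrow> 0 \<le> psiB p q mu t r s"
  unfolding psiB_def using prm_facts[of p q mu]
  by (intro add_nonneg_nonneg mult_nonneg_nonneg) auto

lemma PsiB:
  assumes pr: "prm p q mu" and r: "0 < r" and T: "1 \<le> t - r" and rT: "t - r \<le> r"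
    and s: "0 \<le> s" "s \<le> t" and sT: "s \<noteq> t - r"
  shows "Psi p q mu t r s \<le> psiB p q mu t r s"
proof (cases "\<bar>s-(t-r)\<bar> \<le> s - 1")
  case False
  then show ?thesis using psiB_nn[OF pr, of t r s] unfolding Psi_def by simp
next
  case True
  note f = prm_facts[OF pr]
  note ab = ab_facts[OF less_imp_le[OF r] s(2) True] r
  define T where "T = t - r"
  define \<alpha> where "\<alpha> = \<bar>s-(t-r)\<bar>"
  define \<beta> where "\<beta> = min (t+r-s) (s-1)"
  define a where "a = mu+p*q-2*p"
  define bt where "bt = p*(q-1)"
  define m where "m = min (2*(t-r)) t"
  have a0: "0 < a" using f unfolding a_def by linarith
  have bt2: "2 < bt" using f unfolding bt_def by (simp add: algebra_simps)
  have \<alpha>0: "0 < \<alpha>" using sT unfolding \<alpha>_def by auto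
  have sT2: "T/2 \<le> s" "0 < T" using ab T unfolding T_def by auto
  have s0: "0 < s" using sT2 by simp
  define X1 where "X1 = (\<alpha> powr (2-p) - \<beta> powr (2-p)) / (p-2)"
  define X2 where "X2 = ((s - \<alpha>) powr (1-mu) - (s - \<beta>) powr (1-mu)) / (1-mu)"
  have PsiE: "Psi p q mu t r s = 2 powr a * s powr (-a) * X1 + s powr (1 - bt) * X2"
    unfolding Psi_def X1_def X2_def \<alpha>_def \<beta>_def a_def bt_def using True by simp
  have X1nn: "0 \<le> X1"
  proof -
    have "\<beta> powr (2-p) \<le> \<alpha> powr (2-p)" using ab \<alpha>0 f unfolding \<alpha>_def \<beta>_def by (intro powr_mono2') auto
    then show ?thesis unfolding X1_def using f by simp
  qed
  have X1le: "X1 \<le> (1/(p-2)) * \<alpha> powr (2-p)" unfolding X1_def using f by (simp add: divide_right_mono)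
  have X2le: "X2 \<le> T powr (1-mu) / (1-mu)"
  proof -
    have "X2 \<le> (s - \<alpha>) powr (1-mu) / (1-mu)" unfolding X2_def using f by (intro divide_right_mono) auto
    also have "\<dots> \<le> T powr (1-mu) / (1-mu)"
      using ab f unfolding \<alpha>_def T_def by (intro divide_right_mono powr_mono2) auto
    finally show ?thesis .
  qed
  define w1 where "w1 = (if 0 \<le> s \<and> s \<le> m then (1/(p-2)) * \<bar>s-(t-r)\<bar> powr (2-p) else 0)"
  define w2 where "w2 = (if m \<le> s \<and> s \<le> t then s powr (2-p-a) else 0)"
  define w3 where "w3 = (if (t-r)/2 \<le> s \<and> s \<le> t then s powr (1-bt) else 0)"
  have wnn: "0 \<le> w1" "0 \<le> w2" "0 \<le> w3" unfolding w1_def w2_def w3_def using f by auto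
  have partI: "2 powr a * s powr (-a) * X1 \<le> 4 powr a * T powr (-a) * w1 + (2 powr a * 2 powr (p-2) / (p-2)) * w2"
  proof (cases "s \<le> m")
    case True
    have c1: "2 powr a * s powr (-a) \<le> 4 powr a * T powr (-a)"
    proof -
      have "s powr (-a) \<le> (T/2) powr (-a)" using sT2 a0 by (intro powr_mono2') auto
      also have "\<dots> = 2 powr a * T powr (-a)" using half_pow[of T a] sT2 by simp
      finally have "2 powr a * s powr (-a) \<le> 2 powr a * (2 powr a * T powr (-a))" by (intro mult_left_mono) auto
      also have "\<dots> = (2 powr a * 2 powr a) * T powr (-a)" by simp
      also have "2 powr a * 2 powr a = 4 powr a" by (simp add: powr_mult[symmetric])
      finally show ?thesis .
    qed
    have "2 powr a * s powr (-a) * X1 \<le> 4 powr a * T powr (-a) * ((1/(p-2)) * \<alpha> powr (2-p))"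
      by (rule mult_mono[OF c1 X1le]) (use X1nn in auto)
    also have "\<dots> = 4 powr a * T powr (-a) * w1" unfolding w1_def \<alpha>_def using True s by simp
    moreover have "0 \<le> (2 powr a * 2 powr (p-2) / (p-2)) * w2" using f wnn by simp
    ultimately show ?thesis by linarith
  next
    case False
    have m2: "m = 2*T" "2*T < s" using False s unfolding m_def T_def by auto
    have sgt: "T < s" "2 * T < s" using m2 sT2 by linarith+
    have \<alpha>s1: "\<alpha> = s - T" using sgt unfolding \<alpha>_def T_def by simp
    have \<alpha>s: "\<alpha> = s - T" "s/2 \<le> \<alpha>" using \<alpha>s1 sgt by auto
    have "\<alpha> powr (2-p) \<le> (s/2) powr (2-p)" using \<alpha>s s0 f by (intro powr_mono2') auto
    also have "(s/2) powr (2-p) = 2 powr (p-2) * s powr (2-p)" using half_pow[of s "p-2"] s0 by simp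
    finally have al: "\<alpha> powr (2-p) \<le> 2 powr (p-2) * s powr (2-p)" .
    have "2 powr a * s powr (-a) * X1 \<le> 2 powr a * s powr (-a) * ((1/(p-2)) * (2 powr (p-2) * s powr (2-p)))"
      using X1le al f by (intro mult_left_mono order.trans[OF X1le]) auto
    also have "\<dots> = (2 powr a * 2 powr (p-2) / (p-2)) * (s powr (-a) * s powr (2-p))" by simp
    also have "s powr (-a) * s powr (2-p) = s powr (2-p-a)" using s0 by (simp add: pw)
    also have "(2 powr a * 2 powr (p-2) / (p-2)) * s powr (2-p-a) = (2 powr a * 2 powr (p-2) / (p-2)) * w2"
      unfolding w2_def using m2 s by simp
    moreover have "0 \<le> 4 powr a * T powr (-a) * w1" using wnn by simp
    ultimately show ?thesis by linarith
  qed
  have partII: "s powr (1 - bt) * X2 \<le> (T powr (1-mu) / (1-mu)) * w3"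
  proof -
    have "s powr (1 - bt) * X2 \<le> s powr (1 - bt) * (T powr (1-mu) / (1-mu))" using X2le by (intro mult_left_mono) auto
    also have "\<dots> = (T powr (1-mu) / (1-mu)) * w3" unfolding w3_def using sT2 s unfolding T_def by simp
    finally show ?thesis .
  qed
  have "Psi p q mu t r s \<le> 4 powr a * T powr (-a) * w1 + (2 powr a * 2 powr (p-2) / (p-2)) * w2 + (T powr (1-mu) / (1-mu)) * w3"
    unfolding PsiE using partI partII by linarith
  also have "\<dots> = psiB p q mu t r s" unfolding psiB_def w1_def w2_def w3_def a_def bt_def m_def T_def by simp
  finally show ?thesis .
qed

definition EB :: "real \<Rightarrow> real \<Rightarrow> real \<Rightarrow> real \<Rightarrow> real \<Rightarrow> real" where
  "EB p q mu t r =
    4 powr (mu+p*q-2*p) * (t-r) powr (-(mu+p*q-2*p)) * (2 * (t-r) powr (3-p) / ((3-p)*(p-2)))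
  + (2 powr (mu+p*q-2*p) * 2 powr (p-2) / (p-2)) * ((t-r) powr (3-p-(mu+p*q-2*p)) / ((mu+p*q-2*p)+p-3))
  + ((t-r) powr (1-mu) / (1-mu)) * (2 powr (p*(q-1)-2) * (t-r) powr (2-p*(q-1)) / (p*(q-1)-2))"

lemma intB:
  assumes pr: "prm p q mu" and r: "0 < r" and T: "1 \<le> t - r" and rT: "t - r \<le> r"
  shows "\<exists>V. ((\<lambda>s. psiB p q mu t r s) has_integral V) {0..t} \<and> V \<le> EB p q mu t r"
proof -
  note f = prm_facts[OF pr]
  define T where "T = t - r"
  define a where "a = mu+p*q-2*p"
  define bt where "bt = p*(q-1)"
  define m where "m = min (2*(t-r)) t"
  have mpq: "0 < mu/(p*q)" using f by simp
  have a0: "3 - p < a" using f mpq unfolding a_def by linarith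
  have bt2: "2 < bt" using f unfolding bt_def by (simp add: algebra_simps)
  have m': "m = min (2*T) t" unfolding m_def T_def ..
  have TT: "1 \<le> T" "T \<le> m" "m \<le> t" "m - T \<le> T" "0 \<le> m - T" using T r unfolding T_def m_def by auto
  have i1a: "((\<lambda>s. \<bar>s - T\<bar> powr (2-p)) has_integral ((T-0) powr (2-p+1) + (m-T) powr (2-p+1))/(2-p+1)) {0..m}"
    by (rule abs_pow_has_int) (use TT f in auto)
  have i1: "((\<lambda>s. if 0 \<le> s \<and> s \<le> m then (1/(p-2)) * \<bar>s-(t-r)\<bar> powr (2-p) else 0) has_integral
      (1/(p-2)) * ((T powr (3-p) + (m-T) powr (3-p))/(3-p))) {0..t}"
  proof -
    have "((\<lambda>s. (1/(p-2)) * \<bar>s-(t-r)\<bar> powr (2-p)) has_integral (1/(p-2)) * ((T powr (3-p) + (m-T) powr (3-p))/(3-p))) {0..m}"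
      using has_integral_mult_right[OF i1a, of "1/(p-2)"] by (simp add: T_def)
    note W = this
    show ?thesis by (rule has_int_window[OF _ _ _ W]) (use TT in auto)
  qed
  have v1: "(1/(p-2)) * ((T powr (3-p) + (m-T) powr (3-p))/(3-p)) \<le> 2 * T powr (3-p) / ((3-p)*(p-2))"
  proof -
    have "(m-T) powr (3-p) \<le> T powr (3-p)" using TT f by (intro powr_mono2) auto
    then have "(T powr (3-p) + (m-T) powr (3-p))/(3-p) \<le> (2 * T powr (3-p))/(3-p)" using f by (intro divide_right_mono) auto
    then have "(1/(p-2)) * ((T powr (3-p) + (m-T) powr (3-p))/(3-p)) \<le> (1/(p-2)) * ((2 * T powr (3-p))/(3-p))"
      using f by (intro mult_left_mono) auto
    then show ?thesis by (simp add: mult_ac)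
  qed
  have i2a: "((\<lambda>s. (1 * s + 0) powr (2-p-a)) has_integral ((1*t+0) powr (2-p-a+1) - (1*m+0) powr (2-p-a+1)) / (1*(2-p-a+1))) {m..t}"
    by (rule pow_has_int) (use TT a0 in auto)
  have i2: "((\<lambda>s. if m \<le> s \<and> s \<le> t then s powr (2-p-a) else 0) has_integral
      (t powr (3-p-a) - m powr (3-p-a)) / (3-p-a)) {0..t}"
  proof -
    have "((\<lambda>s. s powr (2-p-a)) has_integral (t powr (3-p-a) - m powr (3-p-a)) / (3-p-a)) {m..t}"
      using i2a by (simp add: algebra_simps)
    note W = this
    show ?thesis by (rule has_int_window[OF _ _ _ W]) (use TT in auto)
  qed
  have v2: "(t powr (3-p-a) - m powr (3-p-a)) / (3-p-a) \<le> T powr (3-p-a) / (a+p-3)"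
  proof -
    have "(t powr (3-p-a) - m powr (3-p-a)) / (3-p-a) = (m powr (3-p-a) - t powr (3-p-a)) / (a+p-3)"
      using a0 by (simp add: field_simps)
    also have "\<dots> \<le> m powr (3-p-a) / (a+p-3)" using a0 by (intro divide_right_mono) auto
    also have "\<dots> \<le> T powr (3-p-a) / (a+p-3)" using a0 TT by (intro divide_right_mono powr_mono2') auto
    finally show ?thesis .
  qed
  have i3a: "((\<lambda>s. (1 * s + 0) powr (1-bt)) has_integral ((1*t+0) powr (1-bt+1) - (1*(T/2)+0) powr (1-bt+1)) / (1*(1-bt+1))) {T/2..t}"
    by (rule pow_has_int) (use TT bt2 in auto)
  have i3: "((\<lambda>s. if (t-r)/2 \<le> s \<and> s \<le> t then s powr (1-bt) else 0) has_integral
      (t powr (2-bt) - (T/2) powr (2-bt)) / (2-bt)) {0..t}"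
  proof -
    have "((\<lambda>s. s powr (1-bt)) has_integral (t powr (2-bt) - (T/2) powr (2-bt)) / (2-bt)) {T/2..t}"
      using i3a by (simp add: algebra_simps)
    note W = this
    show ?thesis unfolding T_def[symmetric] by (rule has_int_window[OF _ _ _ W]) (use TT in auto)
  qed
  have v3: "(t powr (2-bt) - (T/2) powr (2-bt)) / (2-bt) \<le> 2 powr (bt-2) * T powr (2-bt) / (bt-2)"
  proof -
    have "(t powr (2-bt) - (T/2) powr (2-bt)) / (2-bt) = ((T/2) powr (2-bt) - t powr (2-bt)) / (bt-2)"
      using bt2 by (simp add: field_simps)
    also have "\<dots> \<le> (T/2) powr (2-bt) / (bt-2)" using bt2 by (intro divide_right_mono) auto
    finally have v: "(t powr (2-bt) - (T/2) powr (2-bt)) / (2-bt) \<le> (T/2) powr (2-bt) / (bt-2)" .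
    have "(T/2) powr (2-bt) = 2 powr (bt-2) * T powr (2-bt)" using half_pow[of T "bt-2"] TT by simp
    then show ?thesis using v by simp
  qed
  define c1 where "c1 = 4 powr a * T powr (-a)"
  define c2 where "c2 = 2 powr a * 2 powr (p-2) / (p-2)"
  define c3 where "c3 = T powr (1-mu) / (1-mu)"
  have cnn: "0 \<le> c1" "0 \<le> c2" "0 \<le> c3" unfolding c1_def c2_def c3_def using f by auto
  have all: "((\<lambda>s. psiB p q mu t r s) has_integral
      c1 * ((1/(p-2)) * ((T powr (3-p) + (m-T) powr (3-p))/(3-p)))
    + c2 * ((t powr (3-p-a) - m powr (3-p-a)) / (3-p-a))
    + c3 * ((t powr (2-bt) - (T/2) powr (2-bt)) / (2-bt))) {0..t}"
    unfolding psiB_def c1_def c2_def c3_def a_def[symmetric] bt_def[symmetric] T_def[symmetric]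
    unfolding m'[symmetric]
    by (intro has_integral_add has_integral_mult_right i1[unfolded T_def[symmetric]] i2 i3[unfolded T_def[symmetric]])
  have le: "c1 * ((1/(p-2)) * ((T powr (3-p) + (m-T) powr (3-p))/(3-p)))
    + c2 * ((t powr (3-p-a) - m powr (3-p-a)) / (3-p-a))
    + c3 * ((t powr (2-bt) - (T/2) powr (2-bt)) / (2-bt)) \<le> EB p q mu t r"
  proof -
    have "c1 * ((1/(p-2)) * ((T powr (3-p) + (m-T) powr (3-p))/(3-p))) \<le> c1 * (2 * T powr (3-p) / ((3-p)*(p-2)))"
      using v1 cnn by (intro mult_left_mono) auto
    moreover have "c2 * ((t powr (3-p-a) - m powr (3-p-a)) / (3-p-a)) \<le> c2 * (T powr (3-p-a) / (a+p-3))"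
      using v2 cnn by (intro mult_left_mono) auto
    moreover have "c3 * ((t powr (2-bt) - (T/2) powr (2-bt)) / (2-bt)) \<le> c3 * (2 powr (bt-2) * T powr (2-bt) / (bt-2))"
      using v3 cnn by (intro mult_left_mono) auto
    moreover have "EB p q mu t r = c1 * (2 * T powr (3-p) / ((3-p)*(p-2))) + c2 * (T powr (3-p-a) / (a+p-3))
        + c3 * (2 powr (bt-2) * T powr (2-bt) / (bt-2))"
      unfolding EB_def c1_def c2_def c3_def a_def bt_def T_def by simp
    ultimately show ?thesis by linarith
  qed
  show ?thesis using all le by blast
qed

lemma pow_le1: "1 \<le> (T::real) \<Longrightarrow> x \<le> 0 \<Longrightarrow> T powr x \<le> 1"
  by (metis powr_mono powr_zero_eq_one le_numeral_extra(4) order.trans zero_le_one not_one_le_zero powr_eq_0_iff)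

lemma weight1A:
  fixes T r S W a b bt mu p :: real
  assumes T: "1 \<le> T" "0 < r" "r \<le> T" "T \<le> S" "S \<le> 3*T"
    and par: "0 < b" "b \<le> a" "p - mu - bt + b \<le> 0" "2 < p" "p < 3" "0 < mu" "mu < 1" "2 < bt"
    and W: "0 \<le> W" "W \<le> 2 powr b * S powr b * (r powr (p-2) / (2*r))"
  shows "W * (4 powr a * T powr (-a) * (2 * r powr (3-p) / (p-2) + 2 * r powr (3-p) / ((3-p)*(p-2)))
     + 2 powr (bt-1) * T powr (1-bt) * (2 powr (1-mu) * r powr (2-mu) / (1-mu) + r * T powr (1-mu) / (1-mu)))
   \<le> 2 powr b / 2 * 3 powr b * (4 powr a * (2/(p-2) + 2/((3-p)*(p-2))) + 2 powr (bt-1) * (2 powr (1-mu)/(1-mu) + 1/(1-mu)))"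
proof -
  have T0: "0 < T" "0 < S" using T by auto
  define Z where "Z = r powr (p-2) / r"
  have Z: "Z = r powr (p-3)"
  proof -
    have "r powr (p-2) = r powr (p-3) * r powr 1" by (simp only: powr_add[symmetric]) simp
    then show ?thesis unfolding Z_def using T by simp
  qed
  have Z0: "0 \<le> Z" unfolding Z by simp
  have Sb: "S powr b \<le> 3 powr b * T powr b"
  proof -
    have "S powr b \<le> (3*T) powr b" using T par by (intro powr_mono2) auto
    then show ?thesis by (simp add: powr_mult)
  qed
  define E where "E = 4 powr a * T powr (-a) * (2 * r powr (3-p) / (p-2) + 2 * r powr (3-p) / ((3-p)*(p-2)))
     + 2 powr (bt-1) * T powr (1-bt) * (2 powr (1-mu) * r powr (2-mu) / (1-mu) + r * T powr (1-mu) / (1-mu))"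
  have Enn: "0 \<le> E" unfolding E_def using par T by (intro add_nonneg_nonneg mult_nonneg_nonneg) auto
  define k1 where "k1 = 4 powr a * (2/(p-2) + 2/((3-p)*(p-2)))"
  define k2 where "k2 = 2 powr (bt-1) * (2 powr (1-mu)/(1-mu))"
  define k3 where "k3 = 2 powr (bt-1) * (1/(1-mu))"
  have kn: "0 \<le> k1" "0 \<le> k2" "0 \<le> k3" unfolding k1_def k2_def k3_def using par by auto
  have Eeq: "S powr b * Z * E = k1 * (S powr b * T powr (-a) * (Z * r powr (3-p)))
      + k2 * (S powr b * T powr (1-bt) * (Z * r powr (2-mu)))
      + k3 * (S powr b * T powr (1-bt) * T powr (1-mu) * (Z * r))"
    unfolding E_def k1_def k2_def k3_def by (simp add: field_simps)
  have z1: "Z * r powr (3-p) = 1" unfolding Z using T by (simp add: pw)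
  have z2: "Z * r powr (2-mu) \<le> T powr (p-1-mu)"
  proof -
    have "Z * r powr (2-mu) = r powr (p-1-mu)" unfolding Z using T by (simp add: pw algebra_simps)
    also have "\<dots> \<le> T powr (p-1-mu)" using T par by (intro powr_mono2) auto
    finally show ?thesis .
  qed
  have z3: "Z * r \<le> T powr (p-2)"
  proof -
    have "Z * r = r powr (p-2)" unfolding Z_def using T by simp
    also have "\<dots> \<le> T powr (p-2)" using T par by (intro powr_mono2) auto
    finally show ?thesis .
  qed
  have t1: "S powr b * T powr (-a) * (Z * r powr (3-p)) \<le> 3 powr b"
  proof -
    have "S powr b * T powr (-a) \<le> 3 powr b * T powr b * T powr (-a)" using Sb by (intro mult_right_mono) auto
    also have "\<dots> = 3 powr b * T powr (b - a)" using T0 by (simp add: pw mult.assoc add.assoc)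
    also have "\<dots> \<le> 3 powr b * 1" using pow_le1[of T "b-a"] T par by (intro mult_left_mono) auto
    finally show ?thesis using z1 by simp
  qed
  have t2: "S powr b * T powr (1-bt) * (Z * r powr (2-mu)) \<le> 3 powr b"
  proof -
    have "S powr b * T powr (1-bt) * (Z * r powr (2-mu)) \<le> (3 powr b * T powr b) * T powr (1-bt) * T powr (p-1-mu)"
      using Sb z2 Z0 by (intro mult_mono) auto
    also have "\<dots> = 3 powr b * T powr (b + (1-bt) + (p-1-mu))" using T0 by (simp add: pw mult.assoc add.assoc)
    also have "\<dots> \<le> 3 powr b * 1" using pow_le1[of T "b + (1-bt) + (p-1-mu)"] T par by (intro mult_left_mono) auto
    finally show ?thesis by simp
  qed
  have t3: "S powr b * T powr (1-bt) * T powr (1-mu) * (Z * r) \<le> 3 powr b"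
  proof -
    have "S powr b * T powr (1-bt) * T powr (1-mu) * (Z * r) \<le> (3 powr b * T powr b) * T powr (1-bt) * T powr (1-mu) * T powr (p-2)"
      using Sb z3 Z0 T by (intro mult_mono) auto
    also have "\<dots> = 3 powr b * T powr (b + (1-bt) + (1-mu) + (p-2))" using T0 by (simp add: pw mult.assoc add.assoc)
    also have "\<dots> \<le> 3 powr b * 1" using pow_le1[of T "b + (1-bt) + (1-mu) + (p-2)"] T par by (intro mult_left_mono) auto
    finally show ?thesis by simp
  qed
  have "S powr b * Z * E \<le> k1 * 3 powr b + k2 * 3 powr b + k3 * 3 powr b"
    unfolding Eeq using t1 t2 t3 kn by (intro add_mono mult_left_mono) auto
  have WE: "W * E \<le> 2 powr b / 2 * (S powr b * Z * E)"
  proof -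
    have "W * E \<le> (2 powr b * S powr b * (r powr (p-2) / (2*r))) * E" using W Enn by (intro mult_right_mono) auto
    also have "\<dots> = 2 powr b / 2 * (S powr b * Z * E)" unfolding Z_def by (simp add: field_simps)
    finally show ?thesis .
  qed
  also have "\<dots> \<le> 2 powr b / 2 * (k1 * 3 powr b + k2 * 3 powr b + k3 * 3 powr b)"
    using \<open>S powr b * Z * E \<le> k1 * 3 powr b + k2 * 3 powr b + k3 * 3 powr b\<close> by (intro mult_left_mono) auto
  also have "\<dots> = 2 powr b / 2 * 3 powr b * (4 powr a * (2/(p-2) + 2/((3-p)*(p-2))) + 2 powr (bt-1) * (2 powr (1-mu)/(1-mu) + 1/(1-mu)))"
    unfolding k1_def k2_def k3_def by (simp add: algebra_simps)
  finally show ?thesis unfolding E_def .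
qed

lemma weight1B:
  fixes T W a bt mu p e :: real
  assumes T: "1 \<le> T"
    and par: "e - a + 3 - p \<le> 0" "e + 1 - mu + 2 - bt \<le> 0" "2 < p" "p < 3" "0 < mu" "mu < 1" "2 < bt" "3 - p < a"
    and W: "0 \<le> W" "W \<le> 3 * 2 powr e * T powr e"
  shows "W * (4 powr a * T powr (-a) * (2 * T powr (3-p) / ((3-p)*(p-2)))
     + (2 powr a * 2 powr (p-2) / (p-2)) * (T powr (3-p-a) / (a+p-3))
     + (T powr (1-mu) / (1-mu)) * (2 powr (bt-2) * T powr (2-bt) / (bt-2)))
   \<le> 3 * 2 powr e * (4 powr a * 2 / ((3-p)*(p-2)) + 2 powr a * 2 powr (p-2) / ((p-2)*(a+p-3))
       + 2 powr (bt-2) / ((1-mu)*(bt-2)))"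
proof -
  have T0: "0 < T" using T by auto
  define k1 where "k1 = 4 powr a * 2 / ((3-p)*(p-2))"
  define k2 where "k2 = 2 powr a * 2 powr (p-2) / ((p-2)*(a+p-3))"
  define k3 where "k3 = 2 powr (bt-2) / ((1-mu)*(bt-2))"
  have kn: "0 \<le> k1" "0 \<le> k2" "0 \<le> k3" unfolding k1_def k2_def k3_def using par by auto
  define E where "E = 4 powr a * T powr (-a) * (2 * T powr (3-p) / ((3-p)*(p-2)))
     + (2 powr a * 2 powr (p-2) / (p-2)) * (T powr (3-p-a) / (a+p-3))
     + (T powr (1-mu) / (1-mu)) * (2 powr (bt-2) * T powr (2-bt) / (bt-2))"
  have Enn: "0 \<le> E" unfolding E_def using par by (intro add_nonneg_nonneg mult_nonneg_nonneg) auto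
  have Eeq: "T powr e * E = k1 * (T powr e * T powr (-a) * T powr (3-p)) + k2 * (T powr e * T powr (3-p-a))
      + k3 * (T powr e * T powr (1-mu) * T powr (2-bt))"
    unfolding E_def k1_def k2_def k3_def by (simp add: field_simps)
  have t1: "T powr e * T powr (-a) * T powr (3-p) \<le> 1"
  proof -
    have "T powr e * T powr (-a) * T powr (3-p) = T powr (e - a + 3 - p)" using T0 by (simp add: pw mult.assoc algebra_simps)
    also have "\<dots> \<le> 1" using pow_le1 T par by auto
    finally show ?thesis .
  qed
  have t2: "T powr e * T powr (3-p-a) \<le> 1"
  proof -
    have "T powr e * T powr (3-p-a) = T powr (e - a + 3 - p)" using T0 by (simp add: pw algebra_simps)
    also have "\<dots> \<le> 1" using pow_le1 T par by auto
    finally show ?thesis .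
  qed
  have t3: "T powr e * T powr (1-mu) * T powr (2-bt) \<le> 1"
  proof -
    have "T powr e * T powr (1-mu) * T powr (2-bt) = T powr (e + 1 - mu + 2 - bt)" using T0 by (simp add: pw mult.assoc algebra_simps)
    also have "\<dots> \<le> 1" using pow_le1 T par by auto
    finally show ?thesis .
  qed
  have TE: "T powr e * E \<le> k1 + k2 + k3"
    unfolding Eeq using mult_left_mono[OF t1 kn(1)] mult_left_mono[OF t2 kn(2)] mult_left_mono[OF t3 kn(3)] by simp
  have "W * E \<le> (3 * 2 powr e * T powr e) * E" using W Enn by (intro mult_right_mono) auto
  also have "\<dots> = 3 * 2 powr e * (T powr e * E)" by simp
  also have "\<dots> \<le> 3 * 2 powr e * (k1 + k2 + k3)" using TE by (intro mult_left_mono) auto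
  finally show ?thesis unfolding E_def k1_def k2_def k3_def .
qed

lemma I_small:
  assumes Fb: "\<forall>s \<rho>. \<rho> \<noteq> 0 \<longrightarrow> \<bar>F s \<rho>\<bar> \<le> K * G1 p q mu s \<bar>\<rho>\<bar>" and s: "s < 2"
  shows "integral {a..b} (\<lambda>\<rho>. \<rho> * F s \<rho>) = 0"
proof -
  have "\<rho> * F s \<rho> = 0" for \<rho>
  proof (cases "\<rho> = 0")
    case False
    have "\<bar>F s \<rho>\<bar> \<le> K * G1 p q mu s \<bar>\<rho>\<bar>" using spec[OF spec[OF Fb, of s], of \<rho>] False by simp
    moreover have "G1 p q mu s \<bar>\<rho>\<bar> = 0" unfolding G1_def using s by simp
    ultimately show ?thesis by simp
  qed simp
  then have "(\<lambda>\<rho>. \<rho> * F s \<rho>) = (\<lambda>_. 0)" by auto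
  then show ?thesis by simp
qed

lemma part1_core:
  assumes pr: "prm p q mu"
  shows "\<exists>C>0. \<forall>F K t r. 0 \<le> K \<longrightarrow> (\<forall>s \<rho>. \<rho> \<noteq> 0 \<longrightarrow> \<bar>F s \<rho>\<bar> \<le> K * G1 p q mu s \<bar>\<rho>\<bar>)
     \<longrightarrow> (\<forall>s. 2 \<le> s \<longrightarrow> continuous_on UNIV (F s)) \<longrightarrow> (\<forall>s \<rho>. F s (-\<rho>) = F s \<rho>)
     \<longrightarrow> 0 \<le> t \<longrightarrow> 0 \<le> r \<longrightarrow> \<bar>omega2t p q mu t r * Lop F t r\<bar> \<le> C * K"
proof -
  note f = prm_facts[OF pr]
  define a where "a = mu+p*q-2*p"
  define b where "b = 3-p+mu/(p*q)"
  define bt where "bt = p*(q-1)"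
  define e where "e = mu/(p*q)"
  have mpq: "0 < mu/(p*q)" using f by simp
  have bt_eq: "bt = p*q - p" unfolding bt_def by (simp add: algebra_simps)
  have par: "0 < b" "b \<le> a" "2 < bt" "3 - p < a" "p - mu - bt + b \<le> 0" "e - a + 3 - p \<le> 0" "e + 1 - mu + 2 - bt \<le> 0"
    using f(7,8,9,10) mpq unfolding a_def b_def bt_eq e_def by linarith+
  define CA where "CA = 2 powr b / 2 * 3 powr b * (4 powr a * (2/(p-2) + 2/((3-p)*(p-2))) + 2 powr (bt-1) * (2 powr (1-mu)/(1-mu) + 1/(1-mu)))"
  define CB where "CB = 3 * 2 powr e * (4 powr a * 2 / ((3-p)*(p-2)) + 2 powr a * 2 powr (p-2) / ((p-2)*(a+p-3))
       + 2 powr (bt-2) / ((1-mu)*(bt-2)))"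
  have CA0: "0 \<le> CA" unfolding CA_def using f by (intro mult_nonneg_nonneg add_nonneg_nonneg) auto
  have CB0: "0 \<le> CB" unfolding CB_def using f par by (intro mult_nonneg_nonneg add_nonneg_nonneg) auto
  define C where "C = CA + CB + 1"
  have C0: "0 < C" using CA0 CB0 unfolding C_def by linarith
  show ?thesis
  proof (intro exI[of _ C] conjI allI impI)
    show "0 < C" by (rule C0)
    fix F :: "real \<Rightarrow> real \<Rightarrow> real" and K t r :: real
    assume K: "0 \<le> K" and Fb: "\<forall>s \<rho>. \<rho> \<noteq> 0 \<longrightarrow> \<bar>F s \<rho>\<bar> \<le> K * G1 p q mu s \<bar>\<rho>\<bar>"
      and Fc: "\<forall>s. 2 \<le> s \<longrightarrow> continuous_on UNIV (F s)" and Fe: "\<forall>s \<rho>. F s (-\<rho>) = F s \<rho>"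
      and t: "0 \<le> t" and r: "0 \<le> r"
    define I where "I s = integral {r-t+s..r+t-s} (\<lambda>\<rho>. \<rho> * F s \<rho>)" for s
    have LopE: "Lop F t r = 1 / (2 * r) * integral {0..t} I" unfolding Lop_def I_def by simp
    have Ib: "\<bar>I s\<bar> \<le> K * Psi p q mu t r s" if s: "s \<in> {0..t} - {t-r}" and s2: "2 \<le> s" for s
      unfolding I_def by (rule inner_bound[OF pr K Fb]) (use Fc Fe s s2 r in auto)
    have I0: "I s = 0" if "s < 2" for s unfolding I_def using I_small[OF Fb that] by blast
    show "\<bar>omega2t p q mu t r * Lop F t r\<bar> \<le> C * K"
    proof (cases "r = 0")
      case True
      then show ?thesis using C0 K by (simp add: Lop_def)
    next
      case False
      then have r0: "0 < r" using r by simp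
      have om0: "0 \<le> omega2t p q mu t r" unfolding omega2t_def using jb_pos[of "t+r"] by simp
      show ?thesis
      proof (cases "1 \<le> t - r")
        case False
        have "\<bar>integral {0..t} I\<bar> \<le> 0"
        proof (rule int_bound[of "\<lambda>_. 0" 0 0 t "{t-r}"])
          fix s assume s: "s \<in> {0..t} - {t-r}"
          show "\<bar>I s\<bar> \<le> 0"
          proof (cases "s < 2")
            case True then show ?thesis using I0 by simp
          next
            case s2: False
            have "Psi p q mu t r s = 0" unfolding Psi_def using False s2 by (auto simp: abs_if)
            then show ?thesis using Ib[OF s] s2 by simp
          qed
        qed auto
        then have "Lop F t r = 0" unfolding LopE by simp
        then show ?thesis using C0 K by simp
      next
        case True
        define W where "W = omega2t p q mu t r / (2*r)"
        have W0: "0 \<le> W" unfolding W_def using om0 r0 by simp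
        obtain \<psi> E V where psiI: "(\<psi> has_integral V) {0..t}" and VE: "V \<le> E"
          and psinn: "\<And>s. 0 \<le> \<psi> s" and Pb: "\<And>s. s \<in> {0..t} - {t-r} \<Longrightarrow> Psi p q mu t r s \<le> \<psi> s"
          and WE: "W * E \<le> CA + CB"
        proof (cases "r < t - r")
          case True
          obtain V where V: "((\<lambda>s. psiA p q mu t r s) has_integral V) {0..t}" "V \<le> EA p q mu t r"
            using intA[OF pr r0 \<open>1 \<le> t - r\<close> True] by blast
          have Weq: "W = r powr (p-2) * jb (t+r) powr b / (2*r)"
            unfolding W_def omega2t_def b_def using True by simp
          have Wle: "W \<le> 2 powr b * (t+r) powr b * (r powr (p-2) / (2*r))"
          proof -
            have "jb (t+r) powr b \<le> 2 powr b * (t+r) powr b" using jb_pow_le[of "t+r" b] par \<open>1 \<le> t - r\<close> r0 by simp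
            then have "r powr (p-2) * jb (t+r) powr b / (2*r) \<le> r powr (p-2) * (2 powr b * (t+r) powr b) / (2*r)"
              using r0 by (intro divide_right_mono mult_left_mono) auto
            then show ?thesis unfolding Weq by (simp add: mult_ac)
          qed
          have "W * EA p q mu t r \<le> CA" unfolding EA_def CA_def a_def bt_def
            by (rule weight1A) (use Wle W0 par f True \<open>1 \<le> t - r\<close> r0 in \<open>auto simp: a_def bt_def\<close>)
          then show ?thesis
            by (intro that[OF V(1) V(2)]) (use psiA_nn[OF pr] r PsiA[OF pr r0 \<open>1 \<le> t - r\<close> True] CB0 in auto)
        next
          case False
          obtain V where V: "((\<lambda>s. psiB p q mu t r s) has_integral V) {0..t}" "V \<le> EB p q mu t r"
            using intB[OF pr r0 \<open>1 \<le> t - r\<close>] False by force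
          have Weq: "W = jb (t-r) powr e * jb (t+r) / (2*r)"
            unfolding W_def omega2t_def e_def using False by simp
          have Wle: "W \<le> 3 * 2 powr e * (t-r) powr e"
          proof -
            have a1: "jb (t-r) powr e \<le> 2 powr e * (t-r) powr e" using jb_pow_le[of "t-r" e] mpq \<open>1 \<le> t - r\<close> unfolding e_def by simp
            have a2: "jb (t+r) / (2*r) \<le> 3" using jb_le2[of "t+r"] \<open>1 \<le> t - r\<close> False r0 by (simp add: divide_simps)
            have "W = jb (t-r) powr e * (jb (t+r) / (2*r))" unfolding Weq by simp
            also have "\<dots> \<le> (2 powr e * (t-r) powr e) * 3" by (rule mult_mono[OF a1 a2]) (use jb_pos r0 in \<open>auto intro: less_imp_le\<close>)
            finally show ?thesis by (simp add: mult_ac)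
          qed
          have "W * EB p q mu t r \<le> CB" unfolding EB_def CB_def a_def bt_def
            by (rule weight1B) (use Wle W0 par f \<open>1 \<le> t - r\<close> in \<open>auto simp: a_def bt_def\<close>)
          moreover have "t - r \<le> r" using False by simp
          ultimately show ?thesis
            by (intro that[OF V(1) V(2)]) (use psiB_nn[OF pr] PsiB[OF pr r0 \<open>1 \<le> t - r\<close>] CA0 in auto)
        qed
        have Ipt: "\<bar>I s\<bar> \<le> K * \<psi> s" if s: "s \<in> {0..t} - {t-r}" for s
        proof (cases "s < 2")
          case True then show ?thesis using I0 K psinn by simp
        next
          case False
          then show ?thesis using Ib[OF s] Pb[OF s] K by (meson mult_left_mono order.trans not_less)
        qed
        have V0: "0 \<le> V" using has_integral_nonneg[OF psiI] psinn by auto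
        have Ib2: "\<bar>integral {0..t} I\<bar> \<le> K * V"
          by (rule int_bound[OF has_integral_mult_right[OF psiI] _ Ipt, of "{t-r}"]) (use K V0 in auto)
        have "\<bar>omega2t p q mu t r * Lop F t r\<bar> = W * \<bar>integral {0..t} I\<bar>"
          unfolding LopE W_def using om0 r0 by (simp add: abs_mult)
        also have "\<dots> \<le> W * (K * V)" using Ib2 W0 by (intro mult_left_mono) auto
        also have "\<dots> \<le> W * (K * E)" using VE W0 K by (intro mult_left_mono) auto
        also have "\<dots> = K * (W * E)" by simp
        also have "\<dots> \<le> K * (CA + CB)" using WE K by (intro mult_left_mono) auto
        also have "\<dots> \<le> C * K" unfolding C_def using K CA0 CB0 by (simp add: algebra_simps)
        finally show ?thesis .
      qed
    qed
  qed
qed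

lemma Linf_ge:
  assumes B: "\<forall>t r. 0 \<le> t \<and> 0 \<le> r \<longrightarrow> \<bar>f t r\<bar> \<le> B" and tr: "0 \<le> t" "0 \<le> r"
  shows "\<bar>f t r\<bar> \<le> Linf f"
  unfolding Linf_def
proof (rule cSup_upper)
  show "\<bar>f t r\<bar> \<in> {\<bar>f t r\<bar> |t r. 0 \<le> t \<and> 0 \<le> r}" using tr by blast
  show "bdd_above {\<bar>f t r\<bar> |t r. 0 \<le> t \<and> 0 \<le> r}" using B by (auto intro!: bdd_aboveI[of _ B])
qed

lemma Linf_nn:
  assumes B: "\<forall>t r. 0 \<le> t \<and> 0 \<le> r \<longrightarrow> \<bar>f t r\<bar> \<le> B"
  shows "0 \<le> Linf f"
  using Linf_ge[OF B, of 0 0] by simp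

lemma om1t_le: "0 \<le> r \<Longrightarrow> 0 \<le> omega1t p q mu t r \<and> omega1t p q mu t r \<le> omega1 p q mu t r"
  unfolding omega1t_def omega1_def using jb_ge[of r] by (auto intro!: mult_right_mono)

lemma om2t_le: "0 \<le> r \<Longrightarrow> 2 < p \<Longrightarrow> 0 \<le> omega2t p q mu t r \<and> omega2t p q mu t r \<le> omega2 p q mu t r"
  unfolding omega2t_def omega2_def using jb_ge[of r] jb_pos[of "t+r"]
  by (auto intro!: mult_right_mono powr_mono2)

lemma jb_ne: "jb x \<noteq> 0" using jb_pos[of x] by simp

lemma om1t_pos: "0 < r \<Longrightarrow> 0 < omega1t p q mu t r"
  unfolding omega1t_def using jb_ne by auto

lemma om2t_pos: "0 < r \<Longrightarrow> 0 < omega2t p q mu t r"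
  unfolding omega2t_def using jb_ne jb_pos by auto

lemma Fbound:
  fixes a b p \<omega> A B D :: real
  assumes p: "1 \<le> p" and w: "0 < \<omega>" and ha: "\<omega> * \<bar>a\<bar> \<le> A" and hb: "\<omega> * \<bar>b\<bar> \<le> B"
    and hd: "\<omega> * \<bar>a - b\<bar> \<le> D" and AB: "0 \<le> A" "0 \<le> B"
  shows "\<bar>\<bar>a\<bar> powr p - \<bar>b\<bar> powr p\<bar> \<le> p * (A + B) powr (p-1) * D * \<omega> powr (-p)"
proof -
  have m: "max \<bar>a\<bar> \<bar>b\<bar> \<le> (A + B) / \<omega>"
    using ha hb w AB by (auto simp: divide_simps mult.commute)
  have d: "\<bar>a - b\<bar> \<le> D / \<omega>" using hd w by (simp add: divide_simps mult.commute)
  have "\<bar>\<bar>a\<bar> powr p - \<bar>b\<bar> powr p\<bar> \<le> p * (max \<bar>a\<bar> \<bar>b\<bar>) powr (p-1) * \<bar>a - b\<bar>"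
    by (rule powabs_diff[OF p])
  also have "\<dots> \<le> p * ((A + B) / \<omega>) powr (p-1) * (D / \<omega>)"
    using m d p by (intro mult_mono powr_mono2) auto
  also have "\<dots> = p * (A + B) powr (p-1) * D * (\<omega> powr (p-1) * \<omega>) powr (-1)"
    using w AB by (simp add: powr_divide powr_minus divide_simps)
  also have "\<omega> powr (p-1) * \<omega> = \<omega> powr p"
    using w by (simp add: powr_add[symmetric] powr_diff)
  also have "(\<omega> powr p) powr (-1) = \<omega> powr (-p)" using powr_powr[of \<omega> p "-1"] by simp
  finally show ?thesis .
qed

lemma cont_slice:
  fixes w :: "real \<Rightarrow> real \<Rightarrow> real"
  assumes c: "continuous_on ({2..} \<times> UNIV) (\<lambda>(t, r). w t r)" and s: "2 \<le> (s::real)" and p: "0 < p"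
  shows "continuous_on UNIV (\<lambda>\<rho>. \<bar>w s \<rho>\<bar> powr p :: real)"
proof -
  have "continuous_on UNIV ((\<lambda>(t, r). w t r) \<circ> (\<lambda>\<rho>::real. (s, \<rho>)))"
    by (rule continuous_on_compose) (auto intro!: continuous_intros continuous_on_subset[OF c] simp: s)
  then have "continuous_on UNIV (\<lambda>\<rho>. w s \<rho>)" by (simp add: o_def)
  then show ?thesis using p by (intro continuous_on_powr' continuous_intros) auto
qed

lemma slice_bound:
  assumes X: "(w, v) \<in> Xeps p q mu C1 eps"
  shows "\<exists>A B. (\<forall>t r. 0 \<le> t \<and> 0 \<le> r \<longrightarrow> \<bar>omega1 p q mu t r * w t r\<bar> \<le> A)
      \<and> (\<forall>t r. 0 \<le> t \<and> 0 \<le> r \<longrightarrow> \<bar>omega2 p q mu t r * v t r\<bar> \<le> B)"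
  using X unfolding Xeps_def by blast

lemma main_est:
  fixes p :: real and w wb :: "real \<Rightarrow> real \<Rightarrow> real" and om :: "real \<Rightarrow> real \<Rightarrow> real"
  assumes p: "1 \<le> p"
    and omp: "\<And>s x. 0 < x \<Longrightarrow> 0 < om s x"
    and bw: "\<forall>t r. 0 \<le> t \<and> 0 \<le> r \<longrightarrow> \<bar>om t r * w t r\<bar> \<le> A"
    and bwb: "\<forall>t r. 0 \<le> t \<and> 0 \<le> r \<longrightarrow> \<bar>om t r * wb t r\<bar> \<le> B"
    and ew: "\<forall>t r. w t (-r) = w t r" and ewb: "\<forall>t r. wb t (-r) = wb t r"
    and sw: "\<forall>t r. w t r \<noteq> 0 \<longrightarrow> t - r \<ge> 1 \<and> t \<ge> 2"
    and swb: "\<forall>t r. wb t r \<noteq> 0 \<longrightarrow> t - r \<ge> 1 \<and> t \<ge> 2"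
    and \<rho>: "\<rho> \<noteq> 0"
  shows "\<bar>\<bar>w s \<rho>\<bar> powr p - \<bar>wb s \<rho>\<bar> powr p\<bar> \<le>
     p * (Linf (\<lambda>t r. om t r * w t r) + Linf (\<lambda>t r. om t r * wb t r)) powr (p - 1)
       * Linf (\<lambda>t r. om t r * (w t r - wb t r))
       * (if 2 \<le> s \<and> \<bar>\<rho>\<bar> \<le> s - 1 then om s \<bar>\<rho>\<bar> powr (-p) else 0)"
proof -
  define x where "x = \<bar>\<rho>\<bar>"
  have x0: "0 < x" using \<rho> unfolding x_def by simp
  have e1: "w s \<rho> = w s x" "wb s \<rho> = wb s x" unfolding x_def using ew ewb
    by (cases "\<rho> < 0"; simp)+
  have bd: "\<forall>t r. 0 \<le> t \<and> 0 \<le> r \<longrightarrow> \<bar>om t r * (w t r - wb t r)\<bar> \<le> A + B"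
  proof (intro allI impI)
    fix t r :: real assume "0 \<le> t \<and> 0 \<le> r"
    then have "\<bar>om t r * w t r\<bar> \<le> A" "\<bar>om t r * wb t r\<bar> \<le> B" using bw bwb by auto
    then show "\<bar>om t r * (w t r - wb t r)\<bar> \<le> A + B" by (simp add: right_diff_distrib abs_diff_le_iff abs_le_iff)
  qed
  have L0: "0 \<le> Linf (\<lambda>t r. om t r * w t r)" "0 \<le> Linf (\<lambda>t r. om t r * wb t r)"
      "0 \<le> Linf (\<lambda>t r. om t r * (w t r - wb t r))"
    using Linf_nn[OF bw] Linf_nn[OF bwb] Linf_nn[OF bd] by auto
  show ?thesis
  proof (cases "2 \<le> s \<and> x \<le> s - 1")
    case True
    have s0: "0 \<le> s" using True by simp
    have w0: "0 < om s x" using omp[OF x0] .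
    have h1: "om s x * \<bar>w s x\<bar> \<le> Linf (\<lambda>t r. om t r * w t r)"
      using Linf_ge[OF bw s0 less_imp_le[OF x0]] w0 by (simp add: abs_mult)
    have h2: "om s x * \<bar>wb s x\<bar> \<le> Linf (\<lambda>t r. om t r * wb t r)"
      using Linf_ge[OF bwb s0 less_imp_le[OF x0]] w0 by (simp add: abs_mult)
    have h3: "om s x * \<bar>w s x - wb s x\<bar> \<le> Linf (\<lambda>t r. om t r * (w t r - wb t r))"
      using Linf_ge[OF bd s0 less_imp_le[OF x0]] w0 by (simp add: abs_mult)
    have "\<bar>\<bar>w s x\<bar> powr p - \<bar>wb s x\<bar> powr p\<bar> \<le>
      p * (Linf (\<lambda>t r. om t r * w t r) + Linf (\<lambda>t r. om t r * wb t r)) powr (p - 1)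
       * Linf (\<lambda>t r. om t r * (w t r - wb t r)) * om s x powr (-p)"
      by (rule Fbound[OF p w0 h1 h2 h3 L0(1,2)])
    then show ?thesis using True unfolding e1 x_def by simp
  next
    case False
    have "w s x = 0" using sw False x0 by force
    moreover have "wb s x = 0" using swb False x0 by force
    ultimately show ?thesis using False p unfolding e1 x_def by auto
  qed
qed

theorem lemma4p2:
  fixes p q mu eps C1 :: real
  assumes "p * (q - 1) > 2 + 1 / (p * q)"
    and "1 < q" and "q < 2" and "2 < p" and "p < 3"
    and "mu < 1"
    and "- mu - p * q + 2 * p \<le> p - 3 - mu / (p * q)"
    and "eps > 0" and "C1 > 0"
  shows "\<exists>C > 0. \<forall>w v wb vb.
     (w, v) \<in> Xeps p q mu C1 eps \<longrightarrow> (wb, vb) \<in> Xeps p q mu C1 eps \<longrightarrow>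
     (\<forall>t r. 0 \<le> t \<and> 0 \<le> r \<longrightarrow>
        \<bar>omega2t p q mu t r * Lop (\<lambda>s \<rho>. \<bar>w s \<rho>\<bar> powr p - \<bar>wb s \<rho>\<bar> powr p) t r\<bar>
        \<le> C * (Linf (\<lambda>t r. omega1t p q mu t r * w t r)
                + Linf (\<lambda>t r. omega1t p q mu t r * wb t r)) powr (p - 1)
              * Linf (\<lambda>t r. omega1t p q mu t r * (w t r - wb t r))) \<and>
     (\<forall>t r. 0 \<le> t \<and> 0 \<le> r \<longrightarrow>
        \<bar>omega1t p q mu t r / r * Kplus (\<lambda>s \<rho>. \<bar>v s \<rho>\<bar> powr q - \<bar>vb s \<rho>\<bar> powr q) t r\<bar>
        \<le> C * (Linf (\<lambda>t r. omega2t p q mu t r * v t r)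
                + Linf (\<lambda>t r. omega2t p q mu t r * vb t r)) powr (q - 1)
              * Linf (\<lambda>t r. omega2t p q mu t r * (v t r - vb t r)))"
proof -
  have pr: "prm p q mu" using assms unfolding prm_def by auto
  note f = prm_facts[OF pr]
  obtain Ca where Ca: "Ca > 0" and P1: "\<forall>F K t r. 0 \<le> K \<longrightarrow> (\<forall>s \<rho>. \<rho> \<noteq> 0 \<longrightarrow> \<bar>F s \<rho>\<bar> \<le> K * G1 p q mu s \<bar>\<rho>\<bar>)
     \<longrightarrow> (\<forall>s. 2 \<le> s \<longrightarrow> continuous_on UNIV (F s)) \<longrightarrow> (\<forall>s \<rho>. F s (-\<rho>) = F s \<rho>)
     \<longrightarrow> 0 \<le> t \<longrightarrow> 0 \<le> r \<longrightarrow> \<bar>omega2t p q mu t r * Lop F t r\<bar> \<le> Ca * K"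
    using part1_core[OF pr] by blast
  obtain Cb where Cb: "Cb > 0" and P2: "\<forall>F K t r. 0 \<le> K \<longrightarrow> (\<forall>s \<rho>. \<rho> \<noteq> 0 \<longrightarrow> \<bar>F s \<rho>\<bar> \<le> K * H2 p q mu s \<bar>\<rho>\<bar>)
     \<longrightarrow> 0 \<le> t \<longrightarrow> 0 \<le> r \<longrightarrow> \<bar>omega1t p q mu t r / r * Kplus F t r\<bar> \<le> Cb * K"
    using part2_core[OF pr] by blast
  show ?thesis
  proof (intro exI[of _ "p*Ca + q*Cb"] conjI allI impI)
    show "0 < p*Ca + q*Cb" using Ca Cb f by (simp add: add_pos_pos)
  next
    fix w v wb vb :: "real \<Rightarrow> real \<Rightarrow> real" and t r :: real
    assume X1: "(w, v) \<in> Xeps p q mu C1 eps" and X2: "(wb, vb) \<in> Xeps p q mu C1 eps"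
      and tr: "0 \<le> t \<and> 0 \<le> r"
    have X1': "continuous_on ({2..} \<times> UNIV) (\<lambda>(t, r). w t r) \<and>
     continuous_on ({2..} \<times> UNIV) (\<lambda>(t, r). v t r) \<and>
     (\<forall>t r. w t (- r) = w t r \<and> v t (- r) = v t r) \<and>
     (\<forall>t r. w t r \<noteq> 0 \<longrightarrow> t - r \<ge> 1 \<and> t \<ge> 2) \<and>
     (\<forall>t r. v t r \<noteq> 0 \<longrightarrow> t - r \<ge> 1 \<and> t \<ge> 2)" using X1 unfolding Xeps_def by simp
    have X2': "continuous_on ({2..} \<times> UNIV) (\<lambda>(t, r). wb t r) \<and>
     continuous_on ({2..} \<times> UNIV) (\<lambda>(t, r). vb t r) \<and>
     (\<forall>t r. wb t (- r) = wb t r \<and> vb t (- r) = vb t r) \<and>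
     (\<forall>t r. wb t r \<noteq> 0 \<longrightarrow> t - r \<ge> 1 \<and> t \<ge> 2) \<and>
     (\<forall>t r. vb t r \<noteq> 0 \<longrightarrow> t - r \<ge> 1 \<and> t \<ge> 2)" using X2 unfolding Xeps_def by simp
    obtain A B where AB: "\<forall>t r. 0 \<le> t \<and> 0 \<le> r \<longrightarrow> \<bar>omega1 p q mu t r * w t r\<bar> \<le> A"
      "\<forall>t r. 0 \<le> t \<and> 0 \<le> r \<longrightarrow> \<bar>omega2 p q mu t r * v t r\<bar> \<le> B" using slice_bound[OF X1] by blast
    obtain Ab Bb where ABb: "\<forall>t r. 0 \<le> t \<and> 0 \<le> r \<longrightarrow> \<bar>omega1 p q mu t r * wb t r\<bar> \<le> Ab"
      "\<forall>t r. 0 \<le> t \<and> 0 \<le> r \<longrightarrow> \<bar>omega2 p q mu t r * vb t r\<bar> \<le> Bb" using slice_bound[OF X2] by blast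
    have t1: "\<bar>omega1t p q mu t r * z\<bar> \<le> \<bar>omega1 p q mu t r * z\<bar>" if "0 \<le> r" for t r z
      using om1t_le[OF that, of p q mu t] by (simp add: abs_mult mult_right_mono)
    have t2: "\<bar>omega2t p q mu t r * z\<bar> \<le> \<bar>omega2 p q mu t r * z\<bar>" if "0 \<le> r" for t r z
      using om2t_le[OF that, of p q mu t] f by (simp add: abs_mult mult_right_mono)
    have bw: "\<forall>t r. 0 \<le> t \<and> 0 \<le> r \<longrightarrow> \<bar>omega1t p q mu t r * w t r\<bar> \<le> A"
      using AB(1) t1 by (meson order.trans)
    have bwb: "\<forall>t r. 0 \<le> t \<and> 0 \<le> r \<longrightarrow> \<bar>omega1t p q mu t r * wb t r\<bar> \<le> Ab"
      using ABb(1) t1 by (meson order.trans)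
    have bv: "\<forall>t r. 0 \<le> t \<and> 0 \<le> r \<longrightarrow> \<bar>omega2t p q mu t r * v t r\<bar> \<le> B"
      using AB(2) t2 by (meson order.trans)
    have bvb: "\<forall>t r. 0 \<le> t \<and> 0 \<le> r \<longrightarrow> \<bar>omega2t p q mu t r * vb t r\<bar> \<le> Bb"
      using ABb(2) t2 by (meson order.trans)
    define M1 where "M1 = Linf (\<lambda>t r. omega1t p q mu t r * w t r) + Linf (\<lambda>t r. omega1t p q mu t r * wb t r)"
    define D1 where "D1 = Linf (\<lambda>t r. omega1t p q mu t r * (w t r - wb t r))"
    define K1 where "K1 = p * M1 powr (p - 1) * D1"
    have bd1: "\<forall>t r. 0 \<le> t \<and> 0 \<le> r \<longrightarrow> \<bar>omega1t p q mu t r * (w t r - wb t r)\<bar> \<le> A + Ab"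
    proof (intro allI impI)
      fix t r :: real assume h: "0 \<le> t \<and> 0 \<le> r"
      then have "\<bar>omega1t p q mu t r * w t r\<bar> \<le> A" "\<bar>omega1t p q mu t r * wb t r\<bar> \<le> Ab" using bw bwb by auto
      then show "\<bar>omega1t p q mu t r * (w t r - wb t r)\<bar> \<le> A + Ab" by (simp add: right_diff_distrib abs_diff_le_iff abs_le_iff)
    qed
    have D1nn: "0 \<le> D1" unfolding D1_def by (rule Linf_nn[OF bd1])
    have K1nn: "0 \<le> K1" unfolding K1_def using D1nn f by simp
    have Fb1: "\<forall>s \<rho>. \<rho> \<noteq> 0 \<longrightarrow> \<bar>\<bar>w s \<rho>\<bar> powr p - \<bar>wb s \<rho>\<bar> powr p\<bar> \<le> K1 * G1 p q mu s \<bar>\<rho>\<bar>"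
    proof (intro allI impI)
      fix s \<rho> :: real assume \<rho>: "\<rho> \<noteq> 0"
      show "\<bar>\<bar>w s \<rho>\<bar> powr p - \<bar>wb s \<rho>\<bar> powr p\<bar> \<le> K1 * G1 p q mu s \<bar>\<rho>\<bar>"
        unfolding K1_def M1_def D1_def G1_def
        by (rule main_est[OF _ om1t_pos bw bwb _ _ _ _ \<rho>]) (use f X1' X2' in auto)
    qed
    have Fc1: "\<forall>s. 2 \<le> s \<longrightarrow> continuous_on UNIV (\<lambda>\<rho>. \<bar>w s \<rho>\<bar> powr p - \<bar>wb s \<rho>\<bar> powr p)"
    proof (intro allI impI)
      fix s :: real assume s2: "2 \<le> s"
      have c1: "continuous_on ({2..} \<times> UNIV) (\<lambda>(t, r). w t r)" "continuous_on ({2..} \<times> UNIV) (\<lambda>(t, r). wb t r)"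
        using X1' X2' by auto
      show "continuous_on UNIV (\<lambda>\<rho>. \<bar>w s \<rho>\<bar> powr p - \<bar>wb s \<rho>\<bar> powr p)"
        by (rule continuous_on_diff[OF cont_slice[OF c1(1) s2] cont_slice[OF c1(2) s2]]) (use f in auto)
    qed
    have Fe1: "\<forall>s \<rho>. (\<lambda>s \<rho>. \<bar>w s \<rho>\<bar> powr p - \<bar>wb s \<rho>\<bar> powr p) s (-\<rho>) = (\<lambda>s \<rho>. \<bar>w s \<rho>\<bar> powr p - \<bar>wb s \<rho>\<bar> powr p) s \<rho>"
      using X1' X2' by simp
      have "\<bar>omega2t p q mu t r * Lop (\<lambda>s \<rho>. \<bar>w s \<rho>\<bar> powr p - \<bar>wb s \<rho>\<bar> powr p) t r\<bar> \<le> Ca * K1"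
        using spec[OF spec[OF spec[OF spec[OF P1, of "\<lambda>s \<rho>. \<bar>w s \<rho>\<bar> powr p - \<bar>wb s \<rho>\<bar> powr p"], of K1], of t], of r] K1nn Fb1 Fc1 Fe1 tr by blast
      also have "\<dots> = p * Ca * (M1 powr (p - 1) * D1)" unfolding K1_def by simp
      also have "\<dots> \<le> (p*Ca + q*Cb) * (M1 powr (p - 1) * D1)"
        using Cb f D1nn by (intro mult_right_mono) auto
      finally show "\<bar>omega2t p q mu t r * Lop (\<lambda>s \<rho>. \<bar>w s \<rho>\<bar> powr p - \<bar>wb s \<rho>\<bar> powr p) t r\<bar>
        \<le> (p*Ca + q*Cb) * (Linf (\<lambda>t r. omega1t p q mu t r * w t r)
                + Linf (\<lambda>t r. omega1t p q mu t r * wb t r)) powr (p - 1)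
              * Linf (\<lambda>t r. omega1t p q mu t r * (w t r - wb t r))"
        unfolding M1_def D1_def by (simp add: mult.assoc)
      next
    fix w v wb vb :: "real \<Rightarrow> real \<Rightarrow> real" and t r :: real
    assume X1: "(w, v) \<in> Xeps p q mu C1 eps" and X2: "(wb, vb) \<in> Xeps p q mu C1 eps"
      and tr: "0 \<le> t \<and> 0 \<le> r"
    have X1': "continuous_on ({2..} \<times> UNIV) (\<lambda>(t, r). w t r) \<and>
     continuous_on ({2..} \<times> UNIV) (\<lambda>(t, r). v t r) \<and>
     (\<forall>t r. w t (- r) = w t r \<and> v t (- r) = v t r) \<and>
     (\<forall>t r. w t r \<noteq> 0 \<longrightarrow> t - r \<ge> 1 \<and> t \<ge> 2) \<and>
     (\<forall>t r. v t r \<noteq> 0 \<longrightarrow> t - r \<ge> 1 \<and> t \<ge> 2)" using X1 unfolding Xeps_def by simp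
    have X2': "continuous_on ({2..} \<times> UNIV) (\<lambda>(t, r). wb t r) \<and>
     continuous_on ({2..} \<times> UNIV) (\<lambda>(t, r). vb t r) \<and>
     (\<forall>t r. wb t (- r) = wb t r \<and> vb t (- r) = vb t r) \<and>
     (\<forall>t r. wb t r \<noteq> 0 \<longrightarrow> t - r \<ge> 1 \<and> t \<ge> 2) \<and>
     (\<forall>t r. vb t r \<noteq> 0 \<longrightarrow> t - r \<ge> 1 \<and> t \<ge> 2)" using X2 unfolding Xeps_def by simp
    obtain A B where AB: "\<forall>t r. 0 \<le> t \<and> 0 \<le> r \<longrightarrow> \<bar>omega1 p q mu t r * w t r\<bar> \<le> A"
      "\<forall>t r. 0 \<le> t \<and> 0 \<le> r \<longrightarrow> \<bar>omega2 p q mu t r * v t r\<bar> \<le> B" using slice_bound[OF X1] by blast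
    obtain Ab Bb where ABb: "\<forall>t r. 0 \<le> t \<and> 0 \<le> r \<longrightarrow> \<bar>omega1 p q mu t r * wb t r\<bar> \<le> Ab"
      "\<forall>t r. 0 \<le> t \<and> 0 \<le> r \<longrightarrow> \<bar>omega2 p q mu t r * vb t r\<bar> \<le> Bb" using slice_bound[OF X2] by blast
    have t1: "\<bar>omega1t p q mu t r * z\<bar> \<le> \<bar>omega1 p q mu t r * z\<bar>" if "0 \<le> r" for t r z
      using om1t_le[OF that, of p q mu t] by (simp add: abs_mult mult_right_mono)
    have t2: "\<bar>omega2t p q mu t r * z\<bar> \<le> \<bar>omega2 p q mu t r * z\<bar>" if "0 \<le> r" for t r z
      using om2t_le[OF that, of p q mu t] f by (simp add: abs_mult mult_right_mono)
    have bw: "\<forall>t r. 0 \<le> t \<and> 0 \<le> r \<longrightarrow> \<bar>omega1t p q mu t r * w t r\<bar> \<le> A"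
      using AB(1) t1 by (meson order.trans)
    have bwb: "\<forall>t r. 0 \<le> t \<and> 0 \<le> r \<longrightarrow> \<bar>omega1t p q mu t r * wb t r\<bar> \<le> Ab"
      using ABb(1) t1 by (meson order.trans)
    have bv: "\<forall>t r. 0 \<le> t \<and> 0 \<le> r \<longrightarrow> \<bar>omega2t p q mu t r * v t r\<bar> \<le> B"
      using AB(2) t2 by (meson order.trans)
    have bvb: "\<forall>t r. 0 \<le> t \<and> 0 \<le> r \<longrightarrow> \<bar>omega2t p q mu t r * vb t r\<bar> \<le> Bb"
      using ABb(2) t2 by (meson order.trans)
    define M2 where "M2 = Linf (\<lambda>t r. omega2t p q mu t r * v t r) + Linf (\<lambda>t r. omega2t p q mu t r * vb t r)"
    define D2 where "D2 = Linf (\<lambda>t r. omega2t p q mu t r * (v t r - vb t r))"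
    define K2 where "K2 = q * M2 powr (q - 1) * D2"
    have bd2: "\<forall>t r. 0 \<le> t \<and> 0 \<le> r \<longrightarrow> \<bar>omega2t p q mu t r * (v t r - vb t r)\<bar> \<le> B + Bb"
    proof (intro allI impI)
      fix t r :: real assume h: "0 \<le> t \<and> 0 \<le> r"
      then have "\<bar>omega2t p q mu t r * v t r\<bar> \<le> B" "\<bar>omega2t p q mu t r * vb t r\<bar> \<le> Bb" using bv bvb by auto
      then show "\<bar>omega2t p q mu t r * (v t r - vb t r)\<bar> \<le> B + Bb" by (simp add: right_diff_distrib abs_diff_le_iff abs_le_iff)
    qed
    have D2nn: "0 \<le> D2" unfolding D2_def by (rule Linf_nn[OF bd2])
    have K2nn: "0 \<le> K2" unfolding K2_def using D2nn f by simp
    have Fb2: "\<forall>s \<rho>. \<rho> \<noteq> 0 \<longrightarrow> \<bar>\<bar>v s \<rho>\<bar> powr q - \<bar>vb s \<rho>\<bar> powr q\<bar> \<le> K2 * H2 p q mu s \<bar>\<rho>\<bar>"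
    proof (intro allI impI)
      fix s \<rho> :: real assume \<rho>: "\<rho> \<noteq> 0"
      show "\<bar>\<bar>v s \<rho>\<bar> powr q - \<bar>vb s \<rho>\<bar> powr q\<bar> \<le> K2 * H2 p q mu s \<bar>\<rho>\<bar>"
        unfolding K2_def M2_def D2_def H2_def
        by (rule main_est[OF _ om2t_pos bv bvb _ _ _ _ \<rho>]) (use f X1' X2' in auto)
    qed
      have "\<bar>omega1t p q mu t r / r * Kplus (\<lambda>s \<rho>. \<bar>v s \<rho>\<bar> powr q - \<bar>vb s \<rho>\<bar> powr q) t r\<bar> \<le> Cb * K2"
        using spec[OF spec[OF spec[OF spec[OF P2, of "\<lambda>s \<rho>. \<bar>v s \<rho>\<bar> powr q - \<bar>vb s \<rho>\<bar> powr q"], of K2], of t], of r] K2nn Fb2 tr by blast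
      also have "\<dots> = q * Cb * (M2 powr (q - 1) * D2)" unfolding K2_def by simp
      also have "\<dots> \<le> (p*Ca + q*Cb) * (M2 powr (q - 1) * D2)"
        using Ca f D2nn by (intro mult_right_mono) auto
      finally show "\<bar>omega1t p q mu t r / r * Kplus (\<lambda>s \<rho>. \<bar>v s \<rho>\<bar> powr q - \<bar>vb s \<rho>\<bar> powr q) t r\<bar>
        \<le> (p*Ca + q*Cb) * (Linf (\<lambda>t r. omega2t p q mu t r * v t r)
                + Linf (\<lambda>t r. omega2t p q mu t r * vb t r)) powr (q - 1)
              * Linf (\<lambda>t r. omega2t p q mu t r * (v t r - vb t r))"
        unfolding M2_def D2_def by (simp add: mult.assoc)
      qed
qed

end
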